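(* Let $\theta=[\mathrm{vec}(A)^T,\mu^T]^T,\ \theta_0=[\mathrm{vec}(A_0)^T,\mu_0^T]^T\in\mathscr{D}(p,r)$ with $M=M(\mu)$ and $M_0=M(\mu_0)$ positive definite. If $$\|\Sigma(\theta)-\Sigma(\theta_0)\|_F\le\frac{(1-\|A_0\|_2^2)^2\lambda_r(M_0)}{4\sqrt2(1+\|A_0\|_2^2)^2},$$ then $$\|\theta-\theta_0\|_2\le\Big[1+\frac{16\sqrt2\{1+\lambda_1(M_0)\}(1+\|A_0\|_2^2)}{\lambda_r(M_0)(1-\|A_0\|_2^2)}\Big]\|\Sigma(\theta)-\Sigma(\theta_0)\|_F .$$
   Context: Fix integers $1\le r\le p$. For $A\in\mathbb{R}^{(p-r)\times r}$ write $\varphi=\mathrm{vec}(A)$, $X_\varphi=\begin{bmatrix}0_{r\times r}&-A^{T}\\ A&0\end{bmatrix}$, $I_{p\times r}=\begin{bmatrix}I_r\\0\end{bmatrix}$, and let $U(\varphi)=(I_p+X_\varphi)(I_p-X_\varphi)^{-1}I_{p\times r}$ be the Cayley parameterization. For a symmetric $r\times r$ matrix $M$, $\mathrm{vech}(M)$ stacks its on-and-below-diagonal entries column by column, and $M(\mu)$ is the symmetric matrix with $\mathrm{vech}(M(\mu))=\mu$. $\mathscr{D}(p,r)=\{\theta=[\mathrm{vec}(A)^T,\mu^T]^T:\|A\|_2<1,\ \mu\in\mathbb{R}^{r(r+1)/2}\}$ and $\Sigma(\theta)=U(\varphi)M(\mu)U(\varphi)^T$. $\lambda_1(M_0)\ge\dots\ge\lambda_r(M_0)>0$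 are the eigenvalues of the positive definite matrix $M_0$. *)

theory Defs
  imports Complex_Main "Jordan_Normal_Form.Matrix" "Jordan_Normal_Form.Char_Poly"
    "Jordan_Normal_Form.Gauss_Jordan_Elimination"
begin

definition vnorm :: "real vec \<Rightarrow> real" where
  "vnorm v = sqrt (\<Sum>i<dim_vec v. (v $ i)^2)"

definition lnorm :: "real list \<Rightarrow> real" where
  "lnorm xs = sqrt (\<Sum>i<length xs. (xs ! i)^2)"

definition frob :: "real mat \<Rightarrow> real" where
  "frob M = sqrt (\<Sum>i<dim_row M. \<Sum>j<dim_col M. (M $$ (i,j))^2)"

definition spec_norm :: "real mat \<Rightarrow> real" where
  "spec_norm A = Sup {vnorm (A *\<^sub>v x) | x. x \<in> carrier_vec (dim_col A) \<and> vnorm x = 1}"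

definition vecm :: "real mat \<Rightarrow> real list" where
  "vecm A = concat (map (\<lambda>j. map (\<lambda>i. A $$ (i,j)) [0..<dim_row A]) [0..<dim_col A])"

definition vech :: "real mat \<Rightarrow> real list" where
  "vech M = concat (map (\<lambda>j. map (\<lambda>i. M $$ (i,j)) [j..<dim_row M]) [0..<dim_col M])"

definition pos_def :: "nat \<Rightarrow> real mat \<Rightarrow> bool" where
  "pos_def n M \<longleftrightarrow> M \<in> carrier_mat n n \<and> transpose_mat M = M \<and>
     (\<forall>x \<in> carrier_vec n. x \<noteq> 0\<^sub>v n \<longrightarrow> scalar_prod x (M *\<^sub>v x) > 0)"

definition lambda_max :: "real mat \<Rightarrow> real" where
  "lambda_max M = Max {k. eigenvalue M k}"

definition lambda_min :: "real mat \<Rightarrow> real" where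
  "lambda_min M = Min {k. eigenvalue M k}"

(* X_phi for A of size (p-r) x r *)
definition Xmat :: "nat \<Rightarrow> nat \<Rightarrow> real mat \<Rightarrow> real mat" where
  "Xmat p r A = four_block_mat (0\<^sub>m r r) (- transpose_mat A) A (0\<^sub>m (p - r) (p - r))"

definition Ipr :: "nat \<Rightarrow> nat \<Rightarrow> real mat" where
  "Ipr p r = mat p r (\<lambda>(i,j). if i = j then 1 else 0)"

definition Ucay :: "nat \<Rightarrow> nat \<Rightarrow> real mat \<Rightarrow> real mat" where
  "Ucay p r A = (1\<^sub>m p + Xmat p r A) * the (mat_inverse (1\<^sub>m p - Xmat p r A)) * Ipr p r"

definition Sigma :: "nat \<Rightarrow> nat \<Rightarrow> real mat \<Rightarrow> real mat \<Rightarrow> real mat" where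
  "Sigma p r A M = Ucay p r A * M * transpose_mat (Ucay p r A)"

end

theory Submission
  imports Defs "HOL-Analysis.L2_Norm"
begin

declare col_mult[simp del]
declare minus_carrier_mat[simp]

lemma sum_cs_abs: "\<bar>\<Sum>i\<in>A. (f i::real) * g i\<bar> \<le> sqrt (\<Sum>i\<in>A. (f i)^2) * sqrt (\<Sum>i\<in>A. (g i)^2)"
proof -
  have "\<bar>\<Sum>i\<in>A. f i * g i\<bar> \<le> (\<Sum>i\<in>A. \<bar>f i\<bar> * \<bar>g i\<bar>)"
    by (metis (no_types, lifting) abs_mult sum.cong sum_abs)
  also have "\<dots> \<le> L2_set f A * L2_set g A" by (rule L2_set_mult_ineq)
  finally show ?thesis unfolding L2_set_def .
qed

lemma vnorm_sp: "vnorm (v::real vec) = sqrt (v \<bullet> v)"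
  unfolding vnorm_def scalar_prod_def by (simp add: power2_eq_square atLeast0LessThan)

lemma vnorm_ge0[simp]: "vnorm v \<ge> 0" unfolding vnorm_def by (simp add: sum_nonneg)

lemma sp_self_ge0: "(v::real vec) \<bullet> v \<ge> 0" unfolding scalar_prod_def by (auto intro: sum_nonneg)

lemma vnorm_sq: "(vnorm v)^2 = (v::real vec) \<bullet> v"
  unfolding vnorm_sp using sp_self_ge0 by simp

lemma vec_cs: assumes "v \<in> carrier_vec n" "w \<in> carrier_vec n"
  shows "\<bar>(v::real vec) \<bullet> w\<bar> \<le> vnorm v * vnorm w"
proof -
  have "\<bar>v \<bullet> w\<bar> = \<bar>\<Sum>i\<in>{..<n}. v$i * w$i\<bar>" using assms
    unfolding scalar_prod_def by (simp add: atLeast0LessThan)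
  also have "\<dots> \<le> sqrt (\<Sum>i\<in>{..<n}. (v$i)^2) * sqrt (\<Sum>i\<in>{..<n}. (w$i)^2)" by (rule sum_cs_abs)
  also have "\<dots> = vnorm v * vnorm w" using assms unfolding vnorm_def by (simp add: sum_nonneg)
  finally show ?thesis .
qed

lemma vec_cs': assumes "v \<in> carrier_vec n" "w \<in> carrier_vec n"
  shows "(v::real vec) \<bullet> w \<le> vnorm v * vnorm w"
  using vec_cs[OF assms] by simp

lemma vnorm_zero_iff: assumes "v \<in> carrier_vec n" shows "vnorm (v::real vec) = 0 \<longleftrightarrow> v = 0\<^sub>v n"
proof
  assume "vnorm v = 0"
  hence "(\<Sum>i<dim_vec v. (v $ i)^2) = 0" unfolding vnorm_def by (simp add: sum_nonneg)
  hence "\<forall>i\<in>{..<dim_vec v}. (v$i)^2 = 0" by (subst sum_nonneg_eq_0_iff[symmetric]) auto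
  thus "v = 0\<^sub>v n" using assms by (intro eq_vecI) auto
qed (simp add: vnorm_def)

lemma vnorm_smult: "vnorm (c \<cdot>\<^sub>v (v::real vec)) = \<bar>c\<bar> * vnorm v"
proof -
  have "vnorm (c \<cdot>\<^sub>v v) = sqrt (c^2 * (\<Sum>i<dim_vec v. (v $ i)^2))"
    unfolding vnorm_def by (simp add: sum_distrib_left power_mult_distrib)
  thus ?thesis unfolding vnorm_def by (simp add: real_sqrt_mult)
qed

lemma sp_mult_transpose: assumes "W \<in> carrier_mat k n" "x \<in> carrier_vec n" "y \<in> carrier_vec k"
  shows "(W *\<^sub>v x) \<bullet> (y::real vec) = x \<bullet> (transpose_mat W *\<^sub>v y)"
proof -
  have "(transpose_mat W *\<^sub>v y) \<bullet> x = y \<bullet> (W *\<^sub>v x)" by (rule transpose_vec_mult_scalar[OF assms])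
  moreover have "(W *\<^sub>v x) \<bullet> y = y \<bullet> (W *\<^sub>v x)" using assms by (intro comm_scalar_prod[of _ k]) auto
  moreover have "x \<bullet> (transpose_mat W *\<^sub>v y) = (transpose_mat W *\<^sub>v y) \<bullet> x"
    using assms by (intro comm_scalar_prod[of _ n]) auto
  ultimately show ?thesis by simp
qed

definition fip :: "real mat \<Rightarrow> real mat \<Rightarrow> real" where
  "fip X Y = (\<Sum>i<dim_row X. \<Sum>j<dim_col X. X $$ (i,j) * Y $$ (i,j))"

lemma fip_self_ge0: "fip X X \<ge> 0"
  unfolding fip_def by (simp add: sum_nonneg)

lemma frob_fip: "frob X = sqrt (fip X X)"
  unfolding frob_def fip_def by (simp add: power2_eq_square)

lemma frob_ge0[simp]: "frob X \<ge> 0" unfolding frob_def by (simp add: sum_nonneg)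

lemma frob_sq: "(frob X)^2 = fip X X"
  unfolding frob_fip using fip_self_ge0 by simp

lemma fip_cols: assumes "X \<in> carrier_mat n m" "Y \<in> carrier_mat n m"
  shows "fip X Y = (\<Sum>j<m. col X j \<bullet> col Y j)"
proof -
  have "fip X Y = (\<Sum>i<n. \<Sum>j<m. X $$ (i,j) * Y $$ (i,j))" using assms unfolding fip_def by simp
  also have "\<dots> = (\<Sum>j<m. \<Sum>i<n. X $$ (i,j) * Y $$ (i,j))" by (rule sum.swap)
  also have "\<dots> = (\<Sum>j<m. col X j \<bullet> col Y j)"
    using assms by (intro sum.cong refl) (auto simp: scalar_prod_def atLeast0LessThan)
  finally show ?thesis .
qed

lemma fip_comm: assumes "X \<in> carrier_mat n m" "Y \<in> carrier_mat n m"
  shows "fip X Y = fip Y X"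
  using assms unfolding fip_def by (simp add: mult.commute)

lemma fip_transpose: assumes "X \<in> carrier_mat n m" "Y \<in> carrier_mat n m"
  shows "fip (transpose_mat X) (transpose_mat Y) = fip X Y"
proof -
  have "fip (transpose_mat X) (transpose_mat Y) = (\<Sum>j<m. \<Sum>i<n. X $$ (i,j) * Y $$ (i,j))"
    using assms unfolding fip_def by simp
  also have "\<dots> = fip X Y" using assms unfolding fip_def by (simp add: sum.swap[of _ "{..<m}"])
  finally show ?thesis .
qed

lemma frob_transpose: assumes "X \<in> carrier_mat n m"
  shows "frob (transpose_mat X) = frob X"
  unfolding frob_fip using fip_transpose[OF assms assms] by simp

lemma fip_cs: assumes "X \<in> carrier_mat n m" "Y \<in> carrier_mat n m"
  shows "fip X Y \<le> frob X * frob Y"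
proof -
  let ?S = "{..<n} \<times> {..<m}"
  have e: "\<And>Z. Z \<in> carrier_mat n m \<Longrightarrow> (\<Sum>i<n. \<Sum>j<m. f Z (i,j)) = (\<Sum>ij\<in>?S. f Z ij)" for f
    by (simp add: sum.cartesian_product)
  have "fip X Y = (\<Sum>ij\<in>?S. X $$ ij * Y $$ ij)"
    using assms unfolding fip_def by (simp add: sum.cartesian_product)
  also have "\<dots> \<le> \<bar>\<Sum>ij\<in>?S. X $$ ij * Y $$ ij\<bar>" by simp
  also have "\<dots> \<le> sqrt (\<Sum>ij\<in>?S. (X $$ ij)^2) * sqrt (\<Sum>ij\<in>?S. (Y $$ ij)^2)" by (rule sum_cs_abs)
  also have "\<dots> = frob X * frob Y" using assms unfolding frob_def by (simp add: sum.cartesian_product)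
  finally show ?thesis .
qed

lemma fip_add_left: assumes "X \<in> carrier_mat n m" "Y \<in> carrier_mat n m" "Z \<in> carrier_mat n m"
  shows "fip (X + Y) Z = fip X Z + fip Y Z"
  using assms unfolding fip_def by (simp add: sum.distrib[symmetric] algebra_simps)

lemma fip_minus_left: assumes "X \<in> carrier_mat n m" "Y \<in> carrier_mat n m" "Z \<in> carrier_mat n m"
  shows "fip (X - Y) Z = fip X Z - fip Y Z"
  using assms unfolding fip_def by (simp add: sum_subtractf[symmetric] algebra_simps)

lemma fip_uminus_left: assumes "X \<in> carrier_mat n m" "Z \<in> carrier_mat n m"
  shows "fip (- X) Z = - fip X Z"
  using assms unfolding fip_def by (simp add: sum_negf[symmetric])

lemma fip_smult_left: assumes "X \<in> carrier_mat n m" "Z \<in> carrier_mat n m"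
  shows "fip (c \<cdot>\<^sub>m X) Z = c * fip X Z"
  using assms unfolding fip_def by (simp add: sum_distrib_left algebra_simps)

lemma fip_add_right: assumes "X \<in> carrier_mat n m" "Y \<in> carrier_mat n m" "Z \<in> carrier_mat n m"
  shows "fip Z (X + Y) = fip Z X + fip Z Y"
  using assms unfolding fip_def by (simp add: sum.distrib[symmetric] algebra_simps)

lemma fip_minus_right: assumes "X \<in> carrier_mat n m" "Y \<in> carrier_mat n m" "Z \<in> carrier_mat n m"
  shows "fip Z (X - Y) = fip Z X - fip Z Y"
  using assms unfolding fip_def by (simp add: sum_subtractf[symmetric] algebra_simps)

lemma fip_uminus_right: assumes "X \<in> carrier_mat n m" "Z \<in> carrier_mat n m"
  shows "fip Z (- X) = - fip Z X"
  using assms unfolding fip_def by (simp add: sum_negf[symmetric])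

lemma frob_add: assumes "X \<in> carrier_mat n m" "Y \<in> carrier_mat n m"
  shows "frob (X + Y) \<le> frob X + frob Y"
proof -
  have XY: "X + Y \<in> carrier_mat n m" using assms by simp
  have "(frob (X + Y))^2 = fip X X + fip X Y + (fip Y X + fip Y Y)"
    unfolding frob_sq fip_add_left[OF assms XY] fip_add_right[OF assms assms(1)]
      fip_add_right[OF assms assms(2)] ..
  also have "\<dots> \<le> (frob X)^2 + 2 * (frob X * frob Y) + (frob Y)^2"
    using fip_cs[OF assms] fip_cs[OF assms(2,1)] unfolding frob_sq by (simp add: mult.commute)
  also have "\<dots> = (frob X + frob Y)^2" by (simp add: power2_eq_square algebra_simps)
  finally show ?thesis by (rule power2_le_imp_le) simp
qed

lemma frob_uminus: assumes "X \<in> carrier_mat n m" shows "frob (- X) = frob X"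
  using assms unfolding frob_def by simp

lemma frob_minus: assumes "X \<in> carrier_mat n m" "Y \<in> carrier_mat n m"
  shows "frob (X - Y) \<le> frob X + frob Y"
proof -
  have "X - Y = X + (- Y)" using assms by (simp add: minus_add_uminus_mat)
  thus ?thesis using frob_add[of X n m "-Y"] assms frob_uminus[OF assms(2)] by simp
qed

lemma frob_smult: "frob (c \<cdot>\<^sub>m X) = \<bar>c\<bar> * frob X"
proof -
  have "frob (c \<cdot>\<^sub>m X) = sqrt (c^2 * (\<Sum>i<dim_row X. \<Sum>j<dim_col X. (X $$ (i,j))^2))"
    unfolding frob_def by (simp add: sum_distrib_left power_mult_distrib)
  thus ?thesis unfolding frob_def by (simp add: real_sqrt_mult)
qed

lemma fip_cols_self: assumes "X \<in> carrier_mat n m"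
  shows "fip X X = (\<Sum>j<m. (vnorm (col X j))^2)"
  unfolding fip_cols[OF assms assms] vnorm_sq ..

lemma fip_mult_left: assumes "W \<in> carrier_mat k n" "X \<in> carrier_mat n m" "Y \<in> carrier_mat k m"
  shows "fip (W * X) Y = fip X (transpose_mat W * Y)"
proof -
  have "fip (W * X) Y = (\<Sum>j<m. col (W * X) j \<bullet> col Y j)"
    using assms by (intro fip_cols) auto
  also have "\<dots> = (\<Sum>j<m. col X j \<bullet> col (transpose_mat W * Y) j)"
    using assms by (intro sum.cong refl) (auto simp: sp_mult_transpose[OF assms(1)])
  also have "\<dots> = fip X (transpose_mat W * Y)" using assms by (intro fip_cols[symmetric]) auto
  finally show ?thesis .
qed

lemma frob_mult_le: assumes "W \<in> carrier_mat k n" "Y \<in> carrier_mat n m" "c \<ge> 0"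
  and op: "\<And>v. v \<in> carrier_vec n \<Longrightarrow> vnorm (W *\<^sub>v v) \<le> c * vnorm v"
  shows "frob (W * Y) \<le> c * frob Y"
proof -
  have "(frob (W * Y))^2 = (\<Sum>j<m. (vnorm (col (W * Y) j))^2)"
    unfolding frob_sq using assms by (intro fip_cols_self) auto
  also have "\<dots> = (\<Sum>j<m. (vnorm (W *\<^sub>v col Y j))^2)"
    using assms by (intro sum.cong refl) auto
  also have "\<dots> \<le> (\<Sum>j<m. (c * vnorm (col Y j))^2)"
    using assms by (intro sum_mono power_mono op) auto
  also have "\<dots> = c^2 * (frob Y)^2"
    unfolding frob_sq fip_cols_self[OF assms(2)] by (simp add: sum_distrib_left power_mult_distrib)
  also have "\<dots> = (c * frob Y)^2" by (simp add: power_mult_distrib)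
  finally show ?thesis by (rule power2_le_imp_le) (use assms in simp)
qed

lemma frob_mult_ge: assumes "W \<in> carrier_mat k n" "Y \<in> carrier_mat n m" "c \<ge> 0"
  and op: "\<And>v. v \<in> carrier_vec n \<Longrightarrow> vnorm (W *\<^sub>v v) \<ge> c * vnorm v"
  shows "frob (W * Y) \<ge> c * frob Y"
proof -
  have "(c * frob Y)^2 = c^2 * (frob Y)^2" by (simp add: power_mult_distrib)
  also have "\<dots> = (\<Sum>j<m. (c * vnorm (col Y j))^2)"
    unfolding frob_sq fip_cols_self[OF assms(2)] by (simp add: sum_distrib_left power_mult_distrib)
  also have "\<dots> \<le> (\<Sum>j<m. (vnorm (W *\<^sub>v col Y j))^2)"
    using assms by (intro sum_mono power_mono op) auto
  also have "\<dots> = (\<Sum>j<m. (vnorm (col (W * Y) j))^2)"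
    using assms by (intro sum.cong refl) auto
  also have "\<dots> = (frob (W * Y))^2"
    unfolding frob_sq using assms by (intro fip_cols_self[symmetric]) auto
  finally show ?thesis by (rule power2_le_imp_le) simp
qed

lemma frob_mult_right_le: assumes "Y \<in> carrier_mat m n" "W \<in> carrier_mat n k" "c \<ge> 0"
  and op: "\<And>v. v \<in> carrier_vec n \<Longrightarrow> vnorm (transpose_mat W *\<^sub>v v) \<le> c * vnorm v"
  shows "frob (Y * W) \<le> c * frob Y"
proof -
  have "frob (Y * W) = frob (transpose_mat (Y * W))"
    using assms by (intro frob_transpose[symmetric, of _ m k]) auto
  also have "\<dots> = frob (transpose_mat W * transpose_mat Y)" using assms by (simp add: transpose_mult)
  also have "\<dots> \<le> c * frob (transpose_mat Y)"
    by (rule frob_mult_le[of _ k n _ m]) (use assms op in auto)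
  also have "\<dots> = c * frob Y" using frob_transpose[OF assms(1)] by simp
  finally show ?thesis .
qed

lemma fip_quad_ge: assumes "X \<in> carrier_mat n n" "Y \<in> carrier_mat n m"
  and q: "\<And>v. v \<in> carrier_vec n \<Longrightarrow> (X *\<^sub>v v) \<bullet> v \<ge> c * (v \<bullet> v)"
  shows "fip (X * Y) Y \<ge> c * fip Y Y"
proof -
  have "c * fip Y Y = (\<Sum>j<m. c * (col Y j \<bullet> col Y j))"
    unfolding fip_cols[OF assms(2) assms(2)] by (simp add: sum_distrib_left)
  also have "\<dots> \<le> (\<Sum>j<m. (X *\<^sub>v col Y j) \<bullet> col Y j)"
    using assms by (intro sum_mono q) auto
  also have "\<dots> = fip (X * Y) Y"
    using assms by (subst fip_cols[of _ n m]) (auto intro!: sum.cong)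
  finally show ?thesis .
qed

lemma quad_disc: fixes a b c :: real
  assumes "\<And>t. a + 2 * t * b + t^2 * c \<ge> 0" "c \<ge> 0" "a \<ge> 0"
  shows "b^2 \<le> a * c"
proof (cases "c = 0")
  case True
  have "b = 0"
  proof (rule ccontr)
    assume b: "b \<noteq> 0"
    have "a + 2 * (- (a + 1) / (2 * b)) * b + (- (a + 1) / (2 * b))^2 * c \<ge> 0" by (rule assms(1))
    with b True show False by (simp add: field_simps)
  qed
  thus ?thesis using True by simp
next
  case False
  hence c: "c > 0" using assms by simp
  have "a + 2 * (- b / c) * b + (- b / c)^2 * c \<ge> 0" by (rule assms(1))
  hence "a - b^2 / c \<ge> 0" using c by (simp add: field_simps power2_eq_square)
  thus ?thesis using c by (simp add: field_simps)
qed

lemma sum_delta_if: assumes "i < n"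
  shows "(\<Sum>ia = 0..<n. (M $$ (i, ia) - c * (if i = ia then 1 else 0)) * (x::real vec) $ ia)
     = (\<Sum>ia = 0..<n. M $$ (i, ia) * x $ ia) - c * x $ i"
proof -
  have "(\<Sum>ia = 0..<n. (M $$ (i, ia) - c * (if i = ia then 1 else 0)) * x $ ia)
      = (\<Sum>ia = 0..<n. M $$ (i, ia) * x $ ia - (if i = ia then c * x $ ia else 0))"
    by (intro sum.cong) (auto simp: algebra_simps)
  also have "\<dots> = (\<Sum>ia = 0..<n. M $$ (i, ia) * x $ ia) - (\<Sum>ia = 0..<n. (if i = ia then c * x $ ia else 0))"
    by (rule sum_subtractf)
  also have "(\<Sum>ia = 0..<n. (if i = ia then c * x $ ia else 0)) = c * x $ i"
    using assms by simp
  finally show ?thesis .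
qed

lemma smult_mat_vec': assumes "N \<in> carrier_mat n n" "v \<in> carrier_vec n"
  shows "N *\<^sub>v (t \<cdot>\<^sub>v v) = t \<cdot>\<^sub>v (N *\<^sub>v (v::real vec))"
  by (rule mult_mat_vec[OF assms])

lemma psd_cs: assumes N: "N \<in> carrier_mat n n" and sym: "transpose_mat N = N"
  and psd: "\<And>x. x \<in> carrier_vec n \<Longrightarrow> (N *\<^sub>v x) \<bullet> x \<ge> (0::real)"
  and u: "u \<in> carrier_vec n" and v: "v \<in> carrier_vec n"
  shows "((N *\<^sub>v u) \<bullet> v)^2 \<le> ((N *\<^sub>v u) \<bullet> u) * ((N *\<^sub>v v) \<bullet> v)"
proof (rule quad_disc)
  have symq: "(N *\<^sub>v v) \<bullet> u = (N *\<^sub>v u) \<bullet> v"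
    using sp_mult_transpose[OF N v u] sym comm_scalar_prod[of u n "N *\<^sub>v v"] comm_scalar_prod[of v n "N *\<^sub>v u"] N u v by simp
  fix t :: real
  have w: "u + t \<cdot>\<^sub>v v \<in> carrier_vec n" using u v by simp
  have "0 \<le> (N *\<^sub>v (u + t \<cdot>\<^sub>v v)) \<bullet> (u + t \<cdot>\<^sub>v v)" by (rule psd[OF w])
  also have "N *\<^sub>v (u + t \<cdot>\<^sub>v v) = N *\<^sub>v u + t \<cdot>\<^sub>v (N *\<^sub>v v)"
    using N u v by (simp add: mult_add_distrib_mat_vec[OF N] smult_mat_vec')
  also have "(N *\<^sub>v u + t \<cdot>\<^sub>v (N *\<^sub>v v)) \<bullet> (u + t \<cdot>\<^sub>v v)
     = (N *\<^sub>v u) \<bullet> u + t * ((N *\<^sub>v u) \<bullet> v) + t * ((N *\<^sub>v v) \<bullet> u) + t * t * ((N *\<^sub>v v) \<bullet> v)"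
    using N u v
    by (simp add: add_scalar_prod_distrib[of _ n] scalar_prod_add_distrib[of _ n] algebra_simps)
  finally show "0 \<le> (N *\<^sub>v u) \<bullet> u + 2 * t * ((N *\<^sub>v u) \<bullet> v) + t^2 * ((N *\<^sub>v v) \<bullet> v)"
    using symq by (simp add: power2_eq_square algebra_simps)
qed (use psd u v in auto)

lemma vnorm_mult_frob: assumes "N \<in> carrier_mat k n" "x \<in> carrier_vec n"
  shows "vnorm (N *\<^sub>v x) \<le> frob N * vnorm x"
proof -
  have "(vnorm (N *\<^sub>v x))^2 = (\<Sum>i<k. (row N i \<bullet> x)^2)"
    unfolding vnorm_def using assms by (simp add: sum_nonneg)
  also have "\<dots> \<le> (\<Sum>i<k. (vnorm (row N i))^2 * (vnorm x)^2)"
  proof (intro sum_mono)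
    fix i assume i: "i \<in> {..<k}"
    have "\<bar>row N i \<bullet> x\<bar> \<le> vnorm (row N i) * vnorm x" using assms i by (intro vec_cs[of _ n]) auto
    hence "\<bar>row N i \<bullet> x\<bar>^2 \<le> (vnorm (row N i) * vnorm x)^2" by (intro power_mono) auto
    thus "(row N i \<bullet> x)^2 \<le> (vnorm (row N i))^2 * (vnorm x)^2" by (simp add: power_mult_distrib)
  qed
  also have "\<dots> = (\<Sum>i<k. (vnorm (row N i))^2) * (vnorm x)^2" by (simp add: sum_distrib_right)
  also have "(\<Sum>i<k. (vnorm (row N i))^2) = (frob N)^2"
    unfolding frob_def using assms by (simp add: vnorm_def sum_nonneg)
  finally have "(vnorm (N *\<^sub>v x))^2 \<le> (frob N * vnorm x)^2" by (simp add: power_mult_distrib)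
  thus ?thesis by (rule power2_le_imp_le) simp
qed

lemma unit_normalize: assumes x: "x \<in> carrier_vec n" "x \<noteq> 0\<^sub>v n"
  shows "(1 / vnorm x) \<cdot>\<^sub>v x \<in> carrier_vec n" "((1 / vnorm x) \<cdot>\<^sub>v x) \<bullet> ((1 / vnorm x) \<cdot>\<^sub>v x) = 1"
    "vnorm x > 0"
proof -
  have p: "vnorm x > 0" using vnorm_zero_iff[OF x(1)] x(2) vnorm_ge0[of x] by linarith
  thus "vnorm x > 0" .
  show "(1 / vnorm x) \<cdot>\<^sub>v x \<in> carrier_vec n" using x by simp
  have "((1 / vnorm x) \<cdot>\<^sub>v x) \<bullet> ((1 / vnorm x) \<cdot>\<^sub>v x) = (1/vnorm x)^2 * (x \<bullet> x)"
    using x by (simp add: power2_eq_square)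
  also have "\<dots> = 1" using p unfolding vnorm_sq[symmetric] by (simp add: field_simps)
  finally show "((1 / vnorm x) \<cdot>\<^sub>v x) \<bullet> ((1 / vnorm x) \<cdot>\<^sub>v x) = 1" .
qed

lemma rayleigh_min_eig: fixes M :: "real mat"
  assumes M: "M \<in> carrier_mat n n" and sym: "transpose_mat M = M" and n: "n \<ge> 1"
  shows "\<exists>c. eigenvalue M c \<and> (\<forall>x\<in>carrier_vec n. (M *\<^sub>v x) \<bullet> x \<ge> c * (x \<bullet> x))"
proof -
  define S where "S = {(M *\<^sub>v x) \<bullet> x | x. x \<in> carrier_vec n \<and> x \<bullet> x = (1::real)}"
  define c where "c = Inf S"
  have e0: "unit_vec n 0 \<in> carrier_vec n" "unit_vec n 0 \<bullet> unit_vec n 0 = (1::real)"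
    using n by auto
  have Sne: "S \<noteq> {}" unfolding S_def using e0 by blast
  have Sbdd: "bdd_below S"
  proof (rule bdd_belowI)
    fix s assume "s \<in> S"
    then obtain x where x: "x \<in> carrier_vec n" "x \<bullet> x = 1" and s: "s = (M *\<^sub>v x) \<bullet> x"
      unfolding S_def by auto
    have vx: "vnorm x = 1" unfolding vnorm_sp x by simp
    have "\<bar>s\<bar> \<le> vnorm (M *\<^sub>v x) * vnorm x" unfolding s using M x by (intro vec_cs[of _ n]) auto
    also have "\<dots> \<le> frob M" using vnorm_mult_frob[OF M x(1)] vx by simp
    finally show "- frob M \<le> s" by simp
  qed
  have unitge: "(M *\<^sub>v x) \<bullet> x \<ge> c" if "x \<in> carrier_vec n" "x \<bullet> x = 1" for x
    unfolding c_def using that by (intro cInf_lower[OF _ Sbdd]) (auto simp: S_def)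
  have allge: "(M *\<^sub>v x) \<bullet> x \<ge> c * (x \<bullet> x)" if x: "x \<in> carrier_vec n" for x
  proof (cases "x = 0\<^sub>v n")
    case True thus ?thesis using M by simp
  next
    case False
    note un = unit_normalize[OF x False]
    let ?y = "(1 / vnorm x) \<cdot>\<^sub>v x"
    have "c \<le> (M *\<^sub>v ?y) \<bullet> ?y" by (rule unitge[OF un(1,2)])
    also have "(M *\<^sub>v ?y) \<bullet> ?y = (1/vnorm x)^2 * ((M *\<^sub>v x) \<bullet> x)"
      using M x by (simp add: smult_mat_vec' power2_eq_square)
    finally have "c * (vnorm x)^2 \<le> (M *\<^sub>v x) \<bullet> x" using un(3) by (simp add: field_simps)
    thus ?thesis unfolding vnorm_sq .
  qed
  define N where "N = M - c \<cdot>\<^sub>m 1\<^sub>m n"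
  have N: "N \<in> carrier_mat n n" unfolding N_def using M by simp
  have Nx: "N *\<^sub>v x = M *\<^sub>v x - c \<cdot>\<^sub>v x" if "x \<in> carrier_vec n" for x
    unfolding N_def using M that by (intro eq_vecI) (auto simp: scalar_prod_def sum_delta_if)
  have qN: "(N *\<^sub>v x) \<bullet> x = (M *\<^sub>v x) \<bullet> x - c * (x \<bullet> x)" if x: "x \<in> carrier_vec n" for x
    unfolding Nx[OF x] using M x by (simp add: minus_scalar_prod_distrib[of _ n])
  have Nsym: "transpose_mat N = N" unfolding N_def using M sym by (intro eq_matI) (auto, metis index_transpose_mat(1) carrier_matD)
  have Npsd: "(N *\<^sub>v x) \<bullet> x \<ge> 0" if "x \<in> carrier_vec n" for x
    using allge[OF that] qN[OF that] by simp
  have "det N = 0"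
  proof (rule ccontr)
    assume dN: "det N \<noteq> 0"
    from det_non_zero_imp_unit[OF N dN, of "()"]
    obtain T where T: "T \<in> carrier_mat n n" "T * N = 1\<^sub>m n"
      unfolding Units_def ring_mat_def by auto
    define L where "L = frob N"
    define K where "K = frob T"
    have key: "1 \<le> K^2 * L * ((N *\<^sub>v x) \<bullet> x)" if x: "x \<in> carrier_vec n" "x \<bullet> x = 1" for x
    proof -
      have Nxc: "N *\<^sub>v x \<in> carrier_vec n" using N x by simp
      have "vnorm x = vnorm (T *\<^sub>v (N *\<^sub>v x))" using T N x by (simp add: assoc_mult_mat_vec[symmetric])
      also have "\<dots> \<le> K * vnorm (N *\<^sub>v x)" unfolding K_def by (rule vnorm_mult_frob[OF T(1) Nxc])
      finally have 1: "1 \<le> K * vnorm (N *\<^sub>v x)" using x unfolding vnorm_sp by simp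
      have cs: "((N *\<^sub>v x) \<bullet> (N *\<^sub>v x))^2 \<le> ((N *\<^sub>v x) \<bullet> x) * ((N *\<^sub>v (N *\<^sub>v x)) \<bullet> (N *\<^sub>v x))"
        by (rule psd_cs[OF N Nsym Npsd x(1) Nxc])
      have "(N *\<^sub>v (N *\<^sub>v x)) \<bullet> (N *\<^sub>v x) \<le> vnorm (N *\<^sub>v (N *\<^sub>v x)) * vnorm (N *\<^sub>v x)"
        using N x by (intro vec_cs'[of _ n]) auto
      also have "\<dots> \<le> (L * vnorm (N *\<^sub>v x)) * vnorm (N *\<^sub>v x)"
        unfolding L_def by (intro mult_right_mono vnorm_mult_frob[OF N Nxc]) auto
      finally have 2: "(N *\<^sub>v (N *\<^sub>v x)) \<bullet> (N *\<^sub>v x) \<le> L * (vnorm (N *\<^sub>v x))^2"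
        by (simp add: power2_eq_square algebra_simps)
      have q0: "(N *\<^sub>v x) \<bullet> x \<ge> 0" by (rule Npsd[OF x(1)])
      have "((vnorm (N *\<^sub>v x))^2)^2 \<le> ((N *\<^sub>v x) \<bullet> x) * (L * (vnorm (N *\<^sub>v x))^2)"
        using cs unfolding vnorm_sq by (rule order.trans) (intro mult_left_mono 2[unfolded vnorm_sq] q0)
      hence 3: "(vnorm (N *\<^sub>v x))^2 \<le> ((N *\<^sub>v x) \<bullet> x) * L"
      proof -
        assume h: "((vnorm (N *\<^sub>v x))^2)^2 \<le> ((N *\<^sub>v x) \<bullet> x) * (L * (vnorm (N *\<^sub>v x))^2)"
        define z where "z = (vnorm (N *\<^sub>v x))^2"
        define q where "q = (N *\<^sub>v x) \<bullet> x"
        have h': "z * z \<le> (q * L) * z" using h unfolding z_def[symmetric] q_def[symmetric]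
          by (simp add: power2_eq_square algebra_simps)
        have "z \<ge> 0" unfolding z_def by simp
        moreover have "q * L \<ge> 0" unfolding q_def L_def using q0 by simp
        ultimately have "z \<le> q * L"
          using h' by (cases "z = 0") (auto intro: mult_right_le_imp_le)
        thus ?thesis unfolding z_def q_def .
      qed
      have K0: "K \<ge> 0" unfolding K_def by simp
      have "1 \<le> (K * vnorm (N *\<^sub>v x))^2" using 1 by (metis one_le_power)
      also have "\<dots> = K^2 * (vnorm (N *\<^sub>v x))^2" by (simp add: power_mult_distrib)
      also have "\<dots> \<le> K^2 * (((N *\<^sub>v x) \<bullet> x) * L)" by (intro mult_left_mono 3) auto
      finally show ?thesis by (simp add: algebra_simps)
    qed
    have pos: "K^2 * L > 0"
    proof -
      have "1 \<le> K^2 * L * ((N *\<^sub>v unit_vec n 0) \<bullet> unit_vec n 0)" by (rule key[OF e0])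
      moreover have "K^2 * L \<ge> 0" unfolding K_def L_def by simp
      moreover have "K^2 * L \<noteq> 0"
      proof
        assume "K^2 * L = 0"
        with \<open>1 \<le> K^2 * L * ((N *\<^sub>v unit_vec n 0) \<bullet> unit_vec n 0)\<close> show False by simp
      qed
      ultimately show ?thesis by linarith
    qed
    have "c + 1 / (K^2 * L) \<le> c"
      unfolding c_def
    proof (rule cInf_greatest[OF Sne])
      fix s assume "s \<in> S"
      then obtain x where x: "x \<in> carrier_vec n" "x \<bullet> x = 1" and s: "s = (M *\<^sub>v x) \<bullet> x"
        unfolding S_def by auto
      have "1 / (K^2 * L) \<le> (N *\<^sub>v x) \<bullet> x" using key[OF x] pos by (simp add: field_simps)
      thus "Inf S + 1 / (K^2 * L) \<le> s" unfolding s qN[OF x(1)] x(2) c_def by simp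
    qed
    thus False using pos by simp
  qed
  then obtain v where v: "v \<in> carrier_vec n" "v \<noteq> 0\<^sub>v n" "N *\<^sub>v v = 0\<^sub>v n"
    using det_0_iff_vec_prod_zero[OF N] by auto
  have "M *\<^sub>v v = c \<cdot>\<^sub>v v"
  proof -
    have "M *\<^sub>v v - c \<cdot>\<^sub>v v = 0\<^sub>v n" using v Nx by simp
    show ?thesis
    proof (rule eq_vecI)
      fix i assume i: "i < dim_vec (c \<cdot>\<^sub>v v)"
      hence "(M *\<^sub>v v - c \<cdot>\<^sub>v v) $ i = 0\<^sub>v n $ i" using \<open>M *\<^sub>v v - c \<cdot>\<^sub>v v = 0\<^sub>v n\<close> by simp
      thus "(M *\<^sub>v v) $ i = (c \<cdot>\<^sub>v v) $ i" using M v(1) i by simp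
    qed (use M v(1) in simp)
  qed
  hence "eigenvalue M c" unfolding eigenvalue_def eigenvector_def using v M by auto
  thus ?thesis using allge by auto
qed

lemma eig_finite: assumes M: "(M::real mat) \<in> carrier_mat n n"
  shows "finite {k. eigenvalue M k}"
proof -
  have "char_poly M \<noteq> 0" using degree_monic_char_poly[OF M] by auto
  hence "finite {k. poly (char_poly M) k = 0}" by (rule poly_roots_finite)
  thus ?thesis using eigenvalue_root_char_poly[OF M] by simp
qed

lemma sym_uminus: assumes "M \<in> carrier_mat n n" "transpose_mat M = M"
  shows "transpose_mat (- M) = (- M :: real mat)"
  using assms by (intro eq_matI) (auto, metis index_transpose_mat(1) carrier_matD)

lemma eig_facts: fixes M :: "real mat"
  assumes pd: "pos_def n M" and n: "n \<ge> 1"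
  shows "lambda_min M > 0"
    "\<And>x. x \<in> carrier_vec n \<Longrightarrow> (M *\<^sub>v x) \<bullet> x \<ge> lambda_min M * (x \<bullet> x)"
    "\<And>x. x \<in> carrier_vec n \<Longrightarrow> (M *\<^sub>v x) \<bullet> x \<le> lambda_max M * (x \<bullet> x)"
    "lambda_max M > 0"
    "\<And>x. x \<in> carrier_vec n \<Longrightarrow> vnorm (M *\<^sub>v x) \<le> lambda_max M * vnorm x"
    "\<And>x. x \<in> carrier_vec n \<Longrightarrow> vnorm (M *\<^sub>v x) \<ge> lambda_min M * vnorm x"
proof -
  have M: "M \<in> carrier_mat n n" and sym: "transpose_mat M = M"
    and pos: "\<And>x. x \<in> carrier_vec n \<Longrightarrow> x \<noteq> 0\<^sub>v n \<Longrightarrow> x \<bullet> (M *\<^sub>v x) > 0"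
    using pd unfolding pos_def_def by auto
  have fin: "finite {k. eigenvalue M k}" by (rule eig_finite[OF M])
  have eigpos: "k > 0" if "eigenvalue M k" for k
  proof -
    from that obtain v where v: "v \<in> carrier_vec n" "v \<noteq> 0\<^sub>v n" "M *\<^sub>v v = k \<cdot>\<^sub>v v"
      unfolding eigenvalue_def eigenvector_def using M by auto
    have "0 < v \<bullet> (M *\<^sub>v v)" by (rule pos[OF v(1,2)])
    also have "\<dots> = k * (v \<bullet> v)" using v by simp
    finally have "0 < k * (v \<bullet> v)" .
    moreover have "v \<bullet> v \<ge> 0" by (rule sp_self_ge0)
    ultimately show ?thesis by (simp add: zero_less_mult_iff)
  qed
  obtain c where c: "eigenvalue M c" "\<And>x. x\<in>carrier_vec n \<Longrightarrow> (M *\<^sub>v x) \<bullet> x \<ge> c * (x \<bullet> x)"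
    using rayleigh_min_eig[OF M sym n] by auto
  have lmin: "lambda_min M \<le> c" unfolding lambda_min_def using fin c(1) by (intro Min_le) auto
  have "lambda_min M \<in> {k. eigenvalue M k}" unfolding lambda_min_def using fin c(1)
    by (intro Min_in) auto
  thus lpos: "lambda_min M > 0" using eigpos by auto
  show lge: "(M *\<^sub>v x) \<bullet> x \<ge> lambda_min M * (x \<bullet> x)" if x: "x \<in> carrier_vec n" for x
    using c(2)[OF x] mult_right_mono[OF lmin sp_self_ge0[of x]] by linarith
  have Mm: "- M \<in> carrier_mat n n" using M by simp
  obtain d where d: "eigenvalue (- M) d" "\<And>x. x\<in>carrier_vec n \<Longrightarrow> ((- M) *\<^sub>v x) \<bullet> x \<ge> d * (x \<bullet> x)"
    using rayleigh_min_eig[OF Mm sym_uminus[OF M sym] n] by auto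
  have "eigenvalue M (- d)"
  proof -
    from d(1) obtain v where v: "v \<in> carrier_vec n" "v \<noteq> 0\<^sub>v n" "(- M) *\<^sub>v v = d \<cdot>\<^sub>v v"
      unfolding eigenvalue_def eigenvector_def using M by auto
    have "M *\<^sub>v v = (- d) \<cdot>\<^sub>v v"
    proof (rule eq_vecI)
      fix i assume i: "i < dim_vec ((- d) \<cdot>\<^sub>v v)"
      have "((- M) *\<^sub>v v) $ i = (d \<cdot>\<^sub>v v) $ i" using v(3) by simp
      thus "(M *\<^sub>v v) $ i = ((- d) \<cdot>\<^sub>v v) $ i" using i M v(1) by simp
    qed (use M v in simp)
    thus ?thesis unfolding eigenvalue_def eigenvector_def using v M by auto
  qed
  hence lmax: "- d \<le> lambda_max M" unfolding lambda_max_def using fin by (intro Max_ge) auto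
  have "lambda_max M \<in> {k. eigenvalue M k}" unfolding lambda_max_def using fin \<open>eigenvalue M (- d)\<close>
    by (intro Max_in) auto
  thus lmpos: "lambda_max M > 0" using eigpos by auto
  show lle: "(M *\<^sub>v x) \<bullet> x \<le> lambda_max M * (x \<bullet> x)" if x: "x \<in> carrier_vec n" for x
  proof -
    have "((- M) *\<^sub>v x) \<bullet> x = - ((M *\<^sub>v x) \<bullet> x)" using M x by simp
    thus ?thesis using d(2)[OF x] mult_right_mono[OF lmax sp_self_ge0[of x]] by linarith
  qed
  have psd: "(M *\<^sub>v x) \<bullet> x \<ge> 0" if x: "x \<in> carrier_vec n" for x
    using lge[OF x] lpos sp_self_ge0[of x] by (smt (verit) mult_nonneg_nonneg)
  show "vnorm (M *\<^sub>v x) \<le> lambda_max M * vnorm x" if x: "x \<in> carrier_vec n" for x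
  proof -
    have Mx: "M *\<^sub>v x \<in> carrier_vec n" using M x by simp
    have cs: "((M *\<^sub>v x) \<bullet> (M *\<^sub>v x))^2 \<le> ((M *\<^sub>v x) \<bullet> x) * ((M *\<^sub>v (M *\<^sub>v x)) \<bullet> (M *\<^sub>v x))"
      by (rule psd_cs[OF M sym psd x Mx])
    also have "\<dots> \<le> (lambda_max M * (x \<bullet> x)) * (lambda_max M * ((M *\<^sub>v x) \<bullet> (M *\<^sub>v x)))"
      by (intro mult_mono lle x Mx psd) (use lmpos sp_self_ge0 in auto)
    finally have h: "((vnorm (M *\<^sub>v x))^2)^2 \<le> (lambda_max M)^2 * (vnorm x)^2 * (vnorm (M *\<^sub>v x))^2"
      unfolding vnorm_sq by (simp add: power2_eq_square algebra_simps)
    define z where "z = (vnorm (M *\<^sub>v x))^2"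
    have h': "z * z \<le> ((lambda_max M)^2 * (vnorm x)^2) * z" using h unfolding z_def[symmetric]
      by (simp add: power2_eq_square algebra_simps)
    have "z \<le> (lambda_max M)^2 * (vnorm x)^2"
    proof (cases "z = 0")
      case True thus ?thesis by simp
    next
      case False
      hence "z > 0" unfolding z_def by simp
      from mult_right_le_imp_le[OF h' this] show ?thesis .
    qed
    hence "(vnorm (M *\<^sub>v x))^2 \<le> (lambda_max M * vnorm x)^2" unfolding z_def by (simp add: power_mult_distrib)
    thus ?thesis by (rule power2_le_imp_le) (use lmpos in simp)
  qed
  show "vnorm (M *\<^sub>v x) \<ge> lambda_min M * vnorm x" if x: "x \<in> carrier_vec n" for x
  proof (cases "vnorm x = 0")
    case True thus ?thesis by simp
  next
    case False
    hence vx: "vnorm x > 0" using vnorm_ge0[of x] by linarith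
    have "lambda_min M * (vnorm x)^2 \<le> (M *\<^sub>v x) \<bullet> x" using lge[OF x] unfolding vnorm_sq .
    also have "\<dots> \<le> vnorm (M *\<^sub>v x) * vnorm x" using M x by (intro vec_cs'[of _ n]) auto
    finally have "(lambda_min M * vnorm x) * vnorm x \<le> vnorm (M *\<^sub>v x) * vnorm x"
      by (simp add: power2_eq_square algebra_simps)
    thus ?thesis using vx by (rule mult_right_le_imp_le)
  qed
qed

lemma op_transpose: assumes A: "A \<in> carrier_mat m n" and a: "a \<ge> 0"
  and op: "\<And>x. x \<in> carrier_vec n \<Longrightarrow> vnorm (A *\<^sub>v x) \<le> a * vnorm x"
  and w: "w \<in> carrier_vec m"
  shows "vnorm (transpose_mat A *\<^sub>v w) \<le> a * vnorm (w::real vec)"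
proof -
  let ?z = "transpose_mat A *\<^sub>v w"
  have z: "?z \<in> carrier_vec n" using A w by simp
  have "(vnorm ?z)^2 = ?z \<bullet> ?z" by (rule vnorm_sq)
  also have "\<dots> = w \<bullet> (A *\<^sub>v ?z)"
    using sp_mult_transpose[of "transpose_mat A" n m w ?z] A w by simp
  also have "\<dots> \<le> vnorm w * vnorm (A *\<^sub>v ?z)" using A w by (intro vec_cs'[of _ m]) auto
  also have "\<dots> \<le> vnorm w * (a * vnorm ?z)" by (intro mult_left_mono op z) auto
  finally have h: "vnorm ?z * vnorm ?z \<le> (a * vnorm w) * vnorm ?z" by (simp add: power2_eq_square algebra_simps)
  show ?thesis
  proof (cases "vnorm ?z = 0")
    case True thus ?thesis using a by simp
  next
    case False
    hence "vnorm ?z > 0" using vnorm_ge0[of ?z] by linarith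
    from mult_right_le_imp_le[OF h this] show ?thesis .
  qed
qed

lemma spec_facts: assumes A: "A \<in> carrier_mat m n" and n: "n \<ge> 1"
  shows "spec_norm A \<ge> 0" "\<And>x. x \<in> carrier_vec n \<Longrightarrow> vnorm (A *\<^sub>v x) \<le> spec_norm A * vnorm x"
proof -
  define S where "S = {vnorm (A *\<^sub>v x) | x. x \<in> carrier_vec (dim_col A) \<and> vnorm x = 1}"
  have sn: "spec_norm A = Sup S" unfolding spec_norm_def S_def ..
  have e0: "unit_vec n 0 \<in> carrier_vec n" "vnorm (unit_vec n 0 :: real vec) = 1"
    using n by (auto simp: vnorm_sp)
  have dc: "dim_col A = n" using A by simp
  have bdd: "bdd_above S"
  proof (rule bdd_aboveI)
    fix s assume "s \<in> S"
    then obtain x where x: "x \<in> carrier_vec n" "vnorm x = 1" "s = vnorm (A *\<^sub>v x)"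
      unfolding S_def dc by auto
    show "s \<le> frob A" using vnorm_mult_frob[OF A x(1)] x by simp
  qed
  have mem: "vnorm (A *\<^sub>v x) \<le> spec_norm A" if "x \<in> carrier_vec n" "vnorm x = 1" for x
    unfolding sn using that by (intro cSup_upper[OF _ bdd]) (auto simp: S_def dc)
  show "spec_norm A \<ge> 0" using mem[OF e0] vnorm_ge0 by (meson order.trans)
  show "vnorm (A *\<^sub>v x) \<le> spec_norm A * vnorm x" if x: "x \<in> carrier_vec n" for x
  proof (cases "x = 0\<^sub>v n")
    case True thus ?thesis using A by (simp add: vnorm_def)
  next
    case False
    note un = unit_normalize[OF x False]
    let ?y = "(1 / vnorm x) \<cdot>\<^sub>v x"
    have vy: "vnorm ?y = 1" using un(3) by (simp add: vnorm_smult)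
    have "vnorm (A *\<^sub>v ?y) \<le> spec_norm A" by (rule mem[OF un(1) vy])
    also have "A *\<^sub>v ?y = (1 / vnorm x) \<cdot>\<^sub>v (A *\<^sub>v x)" using A x by (rule mult_mat_vec)
    finally have "vnorm (A *\<^sub>v x) / vnorm x \<le> spec_norm A" using un(3) by (simp add: vnorm_smult)
    thus ?thesis using un(3) by (simp add: field_simps)
  qed
qed

lemma iso_facts: assumes U: "U \<in> carrier_mat p r" and UU: "transpose_mat U * U = 1\<^sub>m r"
  shows "\<And>x. x \<in> carrier_vec r \<Longrightarrow> vnorm (U *\<^sub>v x) = vnorm (x::real vec)"
    "\<And>w. w \<in> carrier_vec p \<Longrightarrow> vnorm (transpose_mat U *\<^sub>v w) \<le> vnorm (w::real vec)"
proof -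
  show iso: "vnorm (U *\<^sub>v x) = vnorm x" if x: "x \<in> carrier_vec r" for x
  proof -
    have "(U *\<^sub>v x) \<bullet> (U *\<^sub>v x) = x \<bullet> (transpose_mat U *\<^sub>v (U *\<^sub>v x))"
      using U x by (intro sp_mult_transpose) auto
    also have "transpose_mat U *\<^sub>v (U *\<^sub>v x) = x"
      using U x UU by (simp add: assoc_mult_mat_vec[symmetric, of _ r p])
    finally show ?thesis unfolding vnorm_sp by simp
  qed
  show "vnorm (transpose_mat U *\<^sub>v w) \<le> vnorm w" if "w \<in> carrier_vec p" for w
    using op_transpose[OF U _ _ that, of 1] iso by simp
qed

definition Jm :: "nat \<Rightarrow> nat \<Rightarrow> real mat" where
  "Jm p r = mat p (p - r) (\<lambda>(i,j). if i = j + r then 1 else 0)"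

lemma if01_mult[simp]: "(if P then 1 else 0) * (x::real) = (if P then x else 0)"
  "x * (if P then 1 else 0) = (if P then x else 0)" by auto

lemma sum_shift_delta: fixes i r n :: nat shows
  "(\<Sum>k = 0..<n. if i = k + r then (f k::real) else 0) = (if r \<le> i \<and> i - r < n then f (i - r) else 0)"
proof -
  have "(\<Sum>k = 0..<n. if i = k + r then (f k::real) else 0) = (\<Sum>k = 0..<n. if k = i - r then (if r \<le> i then f k else 0) else 0)"
    by (intro sum.cong) auto
  also have "\<dots> = (if r \<le> i \<and> i - r < n then f (i - r) else 0)" by (subst sum.delta) auto
  finally show ?thesis .
qed

lemma Ipr_carrier[simp]: "Ipr p r \<in> carrier_mat p r" unfolding Ipr_def by simp
lemma Jm_carrier[simp]: "Jm p r \<in> carrier_mat p (p - r)" unfolding Jm_def by simp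

lemma IrIr: assumes "r \<le> p" shows "transpose_mat (Ipr p r) * Ipr p r = 1\<^sub>m r"
  using assms by (intro eq_matI) (auto simp: Ipr_def scalar_prod_def)

lemma JJ: assumes "r \<le> p" shows "transpose_mat (Jm p r) * Jm p r = 1\<^sub>m (p - r)"
  using assms by (intro eq_matI) (auto simp: Jm_def scalar_prod_def sum_shift_delta)

lemma IrJ: assumes "r \<le> p" shows "transpose_mat (Ipr p r) * Jm p r = 0\<^sub>m r (p - r)"
  using assms by (intro eq_matI) (auto simp: Jm_def Ipr_def scalar_prod_def)

lemma JIr: assumes "r \<le> p" shows "transpose_mat (Jm p r) * Ipr p r = 0\<^sub>m (p - r) r"
  using assms by (intro eq_matI) (auto simp: Jm_def Ipr_def scalar_prod_def sum_shift_delta)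

lemma JA: assumes "r \<le> p" "A \<in> carrier_mat (p - r) r"
  shows "Jm p r * A = mat p r (\<lambda>(i,j). if r \<le> i then A $$ (i - r, j) else 0)"
  using assms by (intro eq_matI) (auto simp: Jm_def scalar_prod_def sum_shift_delta)

lemma IrAt: assumes "r \<le> p" "A \<in> carrier_mat (p - r) r"
  shows "Ipr p r * transpose_mat A = mat p (p - r) (\<lambda>(i,j). if i < r then A $$ (j, i) else 0)"
  using assms by (intro eq_matI) (auto simp: Ipr_def scalar_prod_def)

lemma Xdecomp: assumes "r \<le> p" "A \<in> carrier_mat (p - r) r"
  shows "Xmat p r A = Jm p r * A * transpose_mat (Ipr p r) - Ipr p r * transpose_mat A * transpose_mat (Jm p r)"
  using assms unfolding JA[OF assms] IrAt[OF assms]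
  by (intro eq_matI) (auto simp: Xmat_def Jm_def Ipr_def scalar_prod_def sum_shift_delta)

named_theorems malg

lemma massoc[malg]: "dim_col A = dim_row B \<Longrightarrow> dim_col B = dim_row C \<Longrightarrow> (A * B) * C = A * (B * (C::real mat))"
  by (metis assoc_mult_mat carrier_matI)

lemma madd_mult[malg]: "dim_row A = dim_row B \<Longrightarrow> dim_col A = dim_col B \<Longrightarrow> dim_col A = dim_row C \<Longrightarrow>
  (A + B) * C = A * C + B * (C::real mat)"
  by (metis add_mult_distrib_mat carrier_matI)

lemma mmult_add[malg]: "dim_row B = dim_row C \<Longrightarrow> dim_col B = dim_col C \<Longrightarrow> dim_col A = dim_row B \<Longrightarrow>
  A * (B + C) = A * B + A * (C::real mat)"
  by (metis mult_add_distrib_mat carrier_matI)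

lemma mminus_mult[malg]: "dim_row A = dim_row B \<Longrightarrow> dim_col A = dim_col B \<Longrightarrow> dim_col A = dim_row C \<Longrightarrow>
  (A - B) * C = A * C - B * (C::real mat)"
  by (metis minus_mult_distrib_mat carrier_matI)

lemma mmult_minus[malg]: "dim_row B = dim_row C \<Longrightarrow> dim_col B = dim_col C \<Longrightarrow> dim_col A = dim_row B \<Longrightarrow>
  A * (B - C) = A * B - A * (C::real mat)"
  by (metis mult_minus_distrib_mat carrier_matI)

lemma msmult_l[malg]: "dim_col A = dim_row B \<Longrightarrow> (k \<cdot>\<^sub>m A) * B = k \<cdot>\<^sub>m (A * (B::real mat))"
  by (metis mult_smult_assoc_mat carrier_matI)

lemma msmult_r[malg]: "dim_col A = dim_row B \<Longrightarrow> A * (k \<cdot>\<^sub>m B) = k \<cdot>\<^sub>m (A * (B::real mat))"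
  by (metis mult_smult_distrib carrier_matI)

lemma mtrans_mult[malg]: "dim_col A = dim_row B \<Longrightarrow> transpose_mat (A * B) = transpose_mat B * transpose_mat (A::real mat)"
  by (metis transpose_mult carrier_matI)

lemma mtrans_add[malg]: "dim_row A = dim_row B \<Longrightarrow> dim_col A = dim_col B \<Longrightarrow> transpose_mat (A + B) = transpose_mat A + transpose_mat (B::real mat)"
  by (intro eq_matI) auto

lemma mtrans_minus[malg]: "dim_row A = dim_row B \<Longrightarrow> dim_col A = dim_col B \<Longrightarrow> transpose_mat (A - B) = transpose_mat A - transpose_mat (B::real mat)"
  by (intro eq_matI) auto

lemma mtrans_smult[malg]: "transpose_mat (k \<cdot>\<^sub>m A) = k \<cdot>\<^sub>m transpose_mat (A::real mat)"
  by (intro eq_matI) auto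

lemma mtrans_uminus[malg]: "transpose_mat (- A) = - transpose_mat (A::real mat)"
  by (intro eq_matI) auto

lemma madd_zero[malg]: "dim_row A = n \<Longrightarrow> dim_col A = m \<Longrightarrow> A + 0\<^sub>m n m = (A::real mat)"
  "dim_row A = n \<Longrightarrow> dim_col A = m \<Longrightarrow> 0\<^sub>m n m + A = (A::real mat)"
  "dim_row A = n \<Longrightarrow> dim_col A = m \<Longrightarrow> A - 0\<^sub>m n m = (A::real mat)"
  "dim_row A = n \<Longrightarrow> dim_col A = m \<Longrightarrow> 0\<^sub>m n m - A = - (A::real mat)"
  by (intro eq_matI; auto)+

lemma mzero_mult[malg]: "dim_row A = n \<Longrightarrow> 0\<^sub>m k n * A = 0\<^sub>m k (dim_col (A::real mat))"
  "dim_col A = n \<Longrightarrow> A * 0\<^sub>m n k = 0\<^sub>m (dim_row (A::real mat)) k"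
  by (intro eq_matI; auto simp: scalar_prod_def)+

lemma mone_mult[malg]: "dim_row A = n \<Longrightarrow> 1\<^sub>m n * A = (A::real mat)"
  "dim_col A = n \<Longrightarrow> A * 1\<^sub>m n = (A::real mat)"
  by auto

lemma carrier_dims: "A \<in> carrier_mat n m \<Longrightarrow> dim_row A = n \<and> dim_col A = m" by auto

lemma inv_exists: assumes S: "(S::real mat) \<in> carrier_mat n n"
  and pd: "\<And>v. v \<in> carrier_vec n \<Longrightarrow> v \<noteq> 0\<^sub>v n \<Longrightarrow> v \<bullet> (S *\<^sub>v v) \<noteq> 0"
  shows "S \<in> Units (ring_mat TYPE(real) n ())"
proof -
  have "det S \<noteq> 0"
  proof
    assume "det S = 0"
    then obtain v where v: "v \<in> carrier_vec n" "v \<noteq> 0\<^sub>v n" "S *\<^sub>v v = 0\<^sub>v n"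
      using det_0_iff_vec_prod_zero[OF S] by auto
    have "v \<bullet> (S *\<^sub>v v) = 0" using v by simp
    with pd[OF v(1,2)] show False by simp
  qed
  thus ?thesis by (rule det_non_zero_imp_unit[OF S])
qed

lemma inv_obtain: assumes "(S::real mat) \<in> Units (ring_mat TYPE(real) n ())"
  obtains T where "T \<in> carrier_mat n n" "S * T = 1\<^sub>m n" "T * S = 1\<^sub>m n"
  using assms unfolding Units_def ring_mat_def by auto

lemma mat_inverse_some: assumes S: "(S::real mat) \<in> carrier_mat n n"
  and U: "S \<in> Units (ring_mat TYPE(real) n ())"
  shows "S * the (mat_inverse S) = 1\<^sub>m n" "the (mat_inverse S) * S = 1\<^sub>m n"
    "the (mat_inverse S) \<in> carrier_mat n n"
proof -
  have "mat_inverse S \<noteq> None" using mat_inverse(1)[OF S, of "()"] U by auto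
  then obtain T where T: "mat_inverse S = Some T" by auto
  from mat_inverse(2)[OF S T] T
  show "S * the (mat_inverse S) = 1\<^sub>m n" "the (mat_inverse S) * S = 1\<^sub>m n"
    "the (mat_inverse S) \<in> carrier_mat n n" by auto
qed

lemma mcancel1: "dim_row P = n \<Longrightarrow> dim_col P = m \<Longrightarrow> dim_row Q = n \<Longrightarrow> dim_col Q = m \<Longrightarrow>
  dim_row R = n \<Longrightarrow> dim_col R = m \<Longrightarrow> (P + Q) - (Q - R) = P + (R::real mat)"
  by (intro eq_matI) auto

lemma mcancel2: "dim_row P = n \<Longrightarrow> dim_col P = m \<Longrightarrow> dim_row Q = n \<Longrightarrow> dim_col Q = m \<Longrightarrow>
  dim_row I = n \<Longrightarrow> dim_col I = m \<Longrightarrow> (P + Q) + (Q - (I - P)) = (2 \<cdot>\<^sub>m P - I) + 2 \<cdot>\<^sub>m (Q::real mat)"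
  by (intro eq_matI) auto

lemma madd_uminus[malg]: "dim_row X = dim_row Y \<Longrightarrow> dim_col X = dim_col Y \<Longrightarrow> X + - Y = X - (Y::real mat)"
  by (intro eq_matI) auto

lemma vnorm_add: assumes "x \<in> carrier_vec n" "y \<in> carrier_vec n"
  shows "vnorm (x + y) \<le> vnorm x + vnorm (y::real vec)"
proof -
  have "(vnorm (x + y))^2 = x \<bullet> x + 2 * (x \<bullet> y) + y \<bullet> y"
    unfolding vnorm_sq using assms
    by (simp add: add_scalar_prod_distrib[of _ n] scalar_prod_add_distrib[of _ n] comm_scalar_prod[of y n x])
  also have "\<dots> \<le> (vnorm x)^2 + 2 * (vnorm x * vnorm y) + (vnorm y)^2"
    using vec_cs'[OF assms] unfolding vnorm_sq by simp
  also have "\<dots> = (vnorm x + vnorm y)^2" by (simp add: power2_eq_square algebra_simps)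
  finally show ?thesis by (rule power2_le_imp_le) simp
qed

lemma skew_quad: assumes X: "X \<in> carrier_mat n n" and sk: "transpose_mat X = - X"
  and v: "v \<in> carrier_vec n" shows "v \<bullet> (X *\<^sub>v v) = (0::real)"
proof -
  have "v \<bullet> (X *\<^sub>v v) = (transpose_mat X *\<^sub>v v) \<bullet> v"
    using transpose_vec_mult_scalar[OF X v v] by simp
  also have "\<dots> = - ((X *\<^sub>v v) \<bullet> v)" unfolding sk using X v by simp
  also have "(X *\<^sub>v v) \<bullet> v = v \<bullet> (X *\<^sub>v v)" using X v by (intro comm_scalar_prod[of _ n]) auto
  finally show ?thesis by simp
qed

lemma Xskew: assumes "A \<in> carrier_mat (p - r) r" "r \<le> p"
  shows "transpose_mat (Xmat p r A) = - Xmat p r (A::real mat)"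
  using assms by (intro eq_matI) (auto simp: Xmat_def)

lemma Xcarrier: "A \<in> carrier_mat (p - r) r \<Longrightarrow> r \<le> p \<Longrightarrow> Xmat p r A \<in> carrier_mat p p"
  unfolding Xmat_def by (auto intro!: four_block_carrier_mat[of _ r r _ "p - r" "p - r", simplified])

context
  fixes p r :: nat and A :: "real mat"
  assumes rp: "r \<le> p" and A: "A \<in> carrier_mat (p - r) r"
begin

abbreviation "Ir \<equiv> Ipr p r"
abbreviation "J \<equiv> Jm p r"

lemma dims: "dim_row Ir = p" "dim_col Ir = r" "dim_row J = p" "dim_col J = p - r"
  "dim_row A = p - r" "dim_col A = r"
  using A by (simp_all add: Ipr_def Jm_def)

lemmas ids0 = IrIr[OF rp] JJ[OF rp] IrJ[OF rp] JIr[OF rp]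

lemma ids_r: "dim_row Z = r \<Longrightarrow> transpose_mat Ir * (Ir * Z) = Z"
  "dim_row Z = p - r \<Longrightarrow> transpose_mat J * (J * Z) = Z"
  "dim_row Z = p - r \<Longrightarrow> transpose_mat Ir * (J * Z) = 0\<^sub>m r (dim_col Z)"
  "dim_row Z = r \<Longrightarrow> transpose_mat J * (Ir * Z) = 0\<^sub>m (p - r) (dim_col Z)"
  using massoc[of "transpose_mat Ir" Ir Z] massoc[of "transpose_mat J" J Z]
    massoc[of "transpose_mat Ir" J Z] massoc[of "transpose_mat J" Ir Z]
  by (simp_all add: dims ids0 mzero_mult)

lemmas ids = ids0 ids_r


lemma XW: assumes Z: "Z \<in> carrier_mat r r"
  shows "Xmat p r A * (Ir * Z + J * (A * Z)) = J * (A * Z) - Ir * ((transpose_mat A * A) * Z)"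
  unfolding Xdecomp[OF rp A] using carrier_matD[OF Z] by (simp add: malg dims ids)

lemma cayley:
  assumes r1: "1 \<le> r" and a1: "spec_norm A < 1"
  obtains U1 U2 Z where "Z \<in> carrier_mat r r" "(1\<^sub>m r + transpose_mat A * A) * Z = 1\<^sub>m r"
    "Z * (1\<^sub>m r + transpose_mat A * A) = 1\<^sub>m r"
    "U1 = 2 \<cdot>\<^sub>m Z - 1\<^sub>m r" "U2 = 2 \<cdot>\<^sub>m (A * Z)"
    "Ucay p r A = Ir * U1 + J * U2"
proof -
  define a where "a = spec_norm A"
  define B where "B = transpose_mat A * A"
  have Bc: "B \<in> carrier_mat r r" unfolding B_def using A by simp
  have a0: "a \<ge> 0" and opA: "\<And>x. x \<in> carrier_vec r \<Longrightarrow> vnorm (A *\<^sub>v x) \<le> a * vnorm x"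
    using spec_facts[OF A r1] unfolding a_def by auto
  have Bv: "(1\<^sub>m r + B) *\<^sub>v v = v + transpose_mat A *\<^sub>v (A *\<^sub>v v)" if v: "v \<in> carrier_vec r" for v
    unfolding B_def using A v by (simp add: add_mult_distrib_mat_vec[of _ r r])
  have quadB: "v \<bullet> ((1\<^sub>m r + B) *\<^sub>v v) = v \<bullet> v + (A *\<^sub>v v) \<bullet> (A *\<^sub>v v)" if v: "v \<in> carrier_vec r" for v
  proof -
    have "v \<bullet> ((1\<^sub>m r + B) *\<^sub>v v) = v \<bullet> v + v \<bullet> (transpose_mat A *\<^sub>v (A *\<^sub>v v))"
      unfolding Bv[OF v] using A v by (simp add: scalar_prod_add_distrib[of _ r])
    also have "v \<bullet> (transpose_mat A *\<^sub>v (A *\<^sub>v v)) = (A *\<^sub>v v) \<bullet> (A *\<^sub>v v)"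
      using sp_mult_transpose[OF A v, of "A *\<^sub>v v"] A v by simp
    finally show ?thesis .
  qed
  have "1\<^sub>m r + B \<in> Units (ring_mat TYPE(real) r ())"
  proof (rule inv_exists)
    fix v :: "real vec" assume v: "v \<in> carrier_vec r" "v \<noteq> 0\<^sub>v r"
    have "vnorm v > 0" using unit_normalize(3)[OF v] .
    hence "v \<bullet> v > 0" unfolding vnorm_sp by simp
    moreover have "(A *\<^sub>v v) \<bullet> (A *\<^sub>v v) \<ge> 0" by (rule sp_self_ge0)
    ultimately show "v \<bullet> ((1\<^sub>m r + B) *\<^sub>v v) \<noteq> 0" unfolding quadB[OF v(1)] by simp
  qed (use Bc in simp)
  then obtain Z where Z: "Z \<in> carrier_mat r r" "(1\<^sub>m r + B) * Z = 1\<^sub>m r" "Z * (1\<^sub>m r + B) = 1\<^sub>m r"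
    by (rule inv_obtain)
  have Xc: "Xmat p r A \<in> carrier_mat p p" by (rule Xcarrier[OF A rp])
  have "1\<^sub>m p - Xmat p r A \<in> Units (ring_mat TYPE(real) p ())"
  proof (rule inv_exists)
    fix v :: "real vec" assume v: "v \<in> carrier_vec p" "v \<noteq> 0\<^sub>v p"
    have "v \<bullet> ((1\<^sub>m p - Xmat p r A) *\<^sub>v v) = v \<bullet> v - v \<bullet> (Xmat p r A *\<^sub>v v)"
      using v Xc by (simp add: minus_mult_distrib_mat_vec[of _ p p] scalar_prod_minus_distrib[of _ p])
    also have "v \<bullet> (Xmat p r A *\<^sub>v v) = 0" by (rule skew_quad[OF Xc Xskew[OF A rp] v(1)])
    finally have "v \<bullet> ((1\<^sub>m p - Xmat p r A) *\<^sub>v v) = v \<bullet> v" by simp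
    moreover have "vnorm v > 0" using unit_normalize(3)[OF v] .
    ultimately show "v \<bullet> ((1\<^sub>m p - Xmat p r A) *\<^sub>v v) \<noteq> 0" unfolding vnorm_sp by simp
  qed (use Xc in simp)
  moreover have Sc: "1\<^sub>m p - Xmat p r A \<in> carrier_mat p p" using Xc by simp
  ultimately have inv: "(1\<^sub>m p - Xmat p r A) * the (mat_inverse (1\<^sub>m p - Xmat p r A)) = 1\<^sub>m p"
    "the (mat_inverse (1\<^sub>m p - Xmat p r A)) * (1\<^sub>m p - Xmat p r A) = 1\<^sub>m p"
    "the (mat_inverse (1\<^sub>m p - Xmat p r A)) \<in> carrier_mat p p"
    using mat_inverse_some[OF Sc] by auto
  define T where "T = the (mat_inverse (1\<^sub>m p - Xmat p r A))"
  define W where "W = Ir * Z + J * (A * Z)"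
  have Wc: "W \<in> carrier_mat p r" unfolding W_def using A Z(1) Ipr_carrier[of p r] Jm_carrier[of p r]
    by (metis add_carrier_mat mult_carrier_mat)
  have XWe: "Xmat p r A * W = J * (A * Z) - Ir * (B * Z)" unfolding W_def B_def by (rule XW[OF Z(1)])
  have "(1\<^sub>m p - Xmat p r A) * W = W - Xmat p r A * W"
    using carrier_matD[OF Xc] carrier_matD[OF Wc] by (simp add: malg)
  also have "\<dots> = Ir * Z + Ir * (B * Z)"
    unfolding XWe unfolding W_def using carrier_matD[OF Z(1)] carrier_matD[OF Bc]
    by (intro mcancel1[of _ p r]) (simp_all add: dims)
  also have "\<dots> = Ir * ((1\<^sub>m r + B) * Z)"
    using carrier_matD[OF Z(1)] carrier_matD[OF Bc] by (simp add: malg dims)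
  also have "\<dots> = Ir" unfolding Z(2) by (rule right_mult_one_mat[OF Ipr_carrier])
  finally have IXW: "(1\<^sub>m p - Xmat p r A) * W = Ir" .
  have TIr: "T * Ir = W"
  proof -
    have "T * Ir = T * ((1\<^sub>m p - Xmat p r A) * W)" using IXW by simp
    also have "\<dots> = (T * (1\<^sub>m p - Xmat p r A)) * W"
      using carrier_matD[OF inv(3)] carrier_matD[OF Xc] carrier_matD[OF Wc] unfolding T_def
      by (simp add: malg)
    also have "\<dots> = W" using inv carrier_matD[OF Wc] unfolding T_def by simp
    finally show ?thesis .
  qed
  have "Ucay p r A = (1\<^sub>m p + Xmat p r A) * W"
    unfolding Ucay_def T_def[symmetric] TIr[symmetric]
    using carrier_matD[OF inv(3)] carrier_matD[OF Xc] unfolding T_def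
    by (simp add: malg dims)
  also have "\<dots> = W + Xmat p r A * W" using carrier_matD[OF Xc] carrier_matD[OF Wc] by (simp add: malg)
  also have "\<dots> = Ir * (2 \<cdot>\<^sub>m Z - 1\<^sub>m r) + J * (2 \<cdot>\<^sub>m (A * Z))"
  proof -
    have BZ: "B * Z = 1\<^sub>m r - Z"
    proof -
      have "1\<^sub>m r = Z + B * Z" using Z(2) carrier_matD[OF Z(1)] carrier_matD[OF Bc] by (simp add: malg)
      thus ?thesis using carrier_matD[OF Z(1)] carrier_matD[OF Bc] by (intro eq_matI) auto
    qed
    have "W + Xmat p r A * W = (Ir * Z + J * (A * Z)) + (J * (A * Z) - (Ir - Ir * Z))"
      unfolding XWe unfolding W_def BZ using carrier_matD[OF Z(1)] by (simp add: malg dims)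
    also have "\<dots> = (2 \<cdot>\<^sub>m (Ir * Z) - Ir) + 2 \<cdot>\<^sub>m (J * (A * Z))"
      using carrier_matD[OF Z(1)] by (intro mcancel2[of _ p r]) (simp_all add: dims)
    also have "\<dots> = Ir * (2 \<cdot>\<^sub>m Z - 1\<^sub>m r) + J * (2 \<cdot>\<^sub>m (A * Z))"
      using carrier_matD[OF Z(1)] by (simp add: malg dims)
    finally show ?thesis .
  qed
  finally show ?thesis using that Z unfolding B_def by blast
qed

end

lemma smult_mat_vec_l: assumes "M \<in> carrier_mat n m" "x \<in> carrier_vec m"
  shows "(c \<cdot>\<^sub>m M) *\<^sub>v x = c \<cdot>\<^sub>v (M *\<^sub>v (x::real vec))"
  using assms by (intro eq_vecI) auto

lemma msmult_smult[malg]: "a \<cdot>\<^sub>m (b \<cdot>\<^sub>m M) = (a * b) \<cdot>\<^sub>m (M::real mat)"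
  by (intro eq_matI) auto

lemma msmult_minus[malg]: "dim_row X = dim_row Y \<Longrightarrow> dim_col X = dim_col Y \<Longrightarrow> a \<cdot>\<^sub>m (X - Y) = a \<cdot>\<^sub>m X - a \<cdot>\<^sub>m (Y::real mat)"
  by (intro eq_matI) (auto simp: algebra_simps)

lemma msmult_add[malg]: "dim_row X = dim_row Y \<Longrightarrow> dim_col X = dim_col Y \<Longrightarrow> a \<cdot>\<^sub>m (X + Y) = a \<cdot>\<^sub>m X + a \<cdot>\<^sub>m (Y::real mat)"
  by (intro eq_matI) (auto simp: algebra_simps)

lemma quad_ineq: fixes a Y s t :: real
  assumes "0 \<le> a" "a < 1" "0 \<le> Y" "0 \<le> s" "s \<le> a^2 * Y" "0 \<le> t" "t \<le> a^2 * s"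
  shows "(1 - a^2) / (1 + a^2) * (Y + 2 * s + t) \<le> Y - t"
proof -
  have p: "1 + a^2 > 0" by (simp add: add_pos_nonneg)
  have "(1 - a^2) * (Y + 2 * s + t) \<le> (1 + a^2) * (Y - t)"
  proof -
    have "(1 + a^2) * (Y - t) - (1 - a^2) * (Y + 2 * s + t) = 2 * (a^2 * Y - s) + 2 * (a^2 * s - t)"
      by (simp add: algebra_simps)
    also have "\<dots> \<ge> 0" using assms by simp
    finally show ?thesis by simp
  qed
  thus ?thesis using p by (simp add: divide_simps mult.commute)
qed

lemma vnorm_sq_le: assumes "vnorm x \<le> a * vnorm y" "a \<ge> 0"
  shows "x \<bullet> x \<le> a^2 * ((y::real vec) \<bullet> y)"
proof -
  have "(vnorm x)^2 \<le> (a * vnorm y)^2" using assms by (intro power_mono) auto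
  thus ?thesis unfolding vnorm_sq[symmetric] by (simp add: power_mult_distrib)
qed

lemma mcancel3: "dim_row Z = n \<Longrightarrow> dim_col Z = n \<Longrightarrow> 1\<^sub>m n + (2 \<cdot>\<^sub>m Z - 1\<^sub>m n) = 2 \<cdot>\<^sub>m (Z::real mat)"
  by (intro eq_matI) auto

context
  fixes p r :: nat and A :: "real mat"
  assumes rp: "r \<le> p" and A: "A \<in> carrier_mat (p - r) r"
begin

lemma cayley_props:
  assumes r1: "1 \<le> r" and a1: "spec_norm A < 1"
  obtains U1 U2 where "U1 \<in> carrier_mat r r" "U2 \<in> carrier_mat (p - r) r"
    "Ucay p r A = Ipr p r * U1 + Jm p r * U2"
    "transpose_mat U1 = U1"
    "\<And>x. x \<in> carrier_vec r \<Longrightarrow> (U1 *\<^sub>v x) \<bullet> x \<ge> (1 - (spec_norm A)^2) / (1 + (spec_norm A)^2) * (x \<bullet> x)"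
    "U2 = A * (1\<^sub>m r + U1)"
    "(1\<^sub>m r + U1) * (1\<^sub>m r + transpose_mat A * A) = 2 \<cdot>\<^sub>m 1\<^sub>m r"
    "transpose_mat (Ucay p r A) * Ucay p r A = 1\<^sub>m r"
    "transpose_mat (Ipr p r) * Ucay p r A = U1" "transpose_mat (Jm p r) * Ucay p r A = U2"
proof -
  obtain U1 U2 Z where Z: "Z \<in> carrier_mat r r" "(1\<^sub>m r + transpose_mat A * A) * Z = 1\<^sub>m r"
    "Z * (1\<^sub>m r + transpose_mat A * A) = 1\<^sub>m r"
    and U1: "U1 = 2 \<cdot>\<^sub>m Z - 1\<^sub>m r" and U2: "U2 = 2 \<cdot>\<^sub>m (A * Z)"
    and U: "Ucay p r A = Ipr p r * U1 + Jm p r * U2"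
    using cayley[OF rp A r1 a1] by blast
  define B where "B = transpose_mat A * A"
  define S where "S = 1\<^sub>m r + B"
  have Bc: "B \<in> carrier_mat r r" unfolding B_def using A by simp
  have Sc: "S \<in> carrier_mat r r" unfolding S_def using Bc by simp
  note dZ = carrier_matD[OF Z(1)]
  note dA = carrier_matD[OF A]
  have U1c: "U1 \<in> carrier_mat r r" unfolding U1 using Z(1) by simp
  have U2c: "U2 \<in> carrier_mat (p - r) r" unfolding U2 using Z(1) A by simp
  note dU1 = carrier_matD[OF U1c] and dU2 = carrier_matD[OF U2c]
  have ZS: "Z * S = 1\<^sub>m r" "S * Z = 1\<^sub>m r" using Z unfolding S_def B_def by auto
  have St: "transpose_mat S = S" unfolding S_def B_def using dA by (simp add: malg)
  have Zt: "transpose_mat Z = Z"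
  proof -
    have "transpose_mat Z = (Z * S) * transpose_mat Z" using ZS dZ by simp
    also have "\<dots> = Z * (S * transpose_mat Z)" using dZ carrier_matD[OF Sc] by (simp add: malg)
    also have "S * transpose_mat Z = transpose_mat (Z * S)" using St dZ carrier_matD[OF Sc] by (simp add: malg)
    also have "\<dots> = 1\<^sub>m r" using ZS by simp
    finally show ?thesis using dZ by simp
  qed
  have U1t: "transpose_mat U1 = U1" unfolding U1 using Zt dZ by (simp add: malg)
  have U2e: "U2 = A * (1\<^sub>m r + U1)" unfolding U1 U2 using dZ dA by (simp add: mcancel3 malg)
  have U1S: "(1\<^sub>m r + U1) * (1\<^sub>m r + transpose_mat A * A) = 2 \<cdot>\<^sub>m 1\<^sub>m r"
    unfolding U1 using dZ ZS carrier_matD[OF Sc] by (simp add: mcancel3 malg S_def[symmetric] B_def[symmetric])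
  have IrU: "transpose_mat (Ipr p r) * Ucay p r A = U1" and JU: "transpose_mat (Jm p r) * Ucay p r A = U2"
    unfolding U using dU1 dU2 by (simp_all add: malg dims[OF rp A] ids[OF rp A])
  have BZ: "B * Z = 1\<^sub>m r - Z"
  proof -
    have "1\<^sub>m r = Z + B * Z" using ZS(2) dZ carrier_matD[OF Bc] unfolding S_def by (simp add: malg)
    thus ?thesis using dZ carrier_matD[OF Bc] by (intro eq_matI) auto
  qed
  have UU: "transpose_mat (Ucay p r A) * Ucay p r A = 1\<^sub>m r"
  proof -
    have "transpose_mat (Ucay p r A) * Ucay p r A = transpose_mat U1 * U1 + transpose_mat U2 * U2"
      unfolding U using dU1 dU2 by (simp add: malg dims[OF rp A] ids[OF rp A])
    also have "transpose_mat U2 * U2 = 4 \<cdot>\<^sub>m (Z * (B * Z))"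
      unfolding U2 B_def using dZ dA Zt by (simp add: malg)
    also have "\<dots> = 4 \<cdot>\<^sub>m Z - 4 \<cdot>\<^sub>m (Z * Z)" unfolding BZ using dZ by (simp add: malg)
    also have "transpose_mat U1 * U1 = 4 \<cdot>\<^sub>m (Z * Z) - 4 \<cdot>\<^sub>m Z + 1\<^sub>m r"
      unfolding U1t unfolding U1 using dZ by (simp add: malg) (intro eq_matI; auto simp: algebra_simps)
    also have "(4 \<cdot>\<^sub>m (Z * Z) - 4 \<cdot>\<^sub>m Z + 1\<^sub>m r) + (4 \<cdot>\<^sub>m Z - 4 \<cdot>\<^sub>m (Z * Z)) = 1\<^sub>m r"
      using dZ by (intro eq_matI) auto
    finally show ?thesis .
  qed
  define a where "a = spec_norm A"
  have a0: "a \<ge> 0" and opA: "\<And>x. x \<in> carrier_vec r \<Longrightarrow> vnorm (A *\<^sub>v x) \<le> a * vnorm x"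
    using spec_facts[OF A r1] unfolding a_def by auto
  have opAt: "\<And>w. w \<in> carrier_vec (p - r) \<Longrightarrow> vnorm (transpose_mat A *\<^sub>v w) \<le> a * vnorm w"
    by (rule op_transpose[OF A a0 opA])
  have a1': "a < 1" using a1 unfolding a_def .
  have quad: "(U1 *\<^sub>v x) \<bullet> x \<ge> (1 - a^2) / (1 + a^2) * (x \<bullet> x)" if x: "x \<in> carrier_vec r" for x
  proof -
    define y where "y = Z *\<^sub>v x"
    define Ay where "Ay = A *\<^sub>v y"
    define By where "By = transpose_mat A *\<^sub>v Ay"
    have y: "y \<in> carrier_vec r" unfolding y_def using Z(1) x by simp
    have Ayc: "Ay \<in> carrier_vec (p - r)" unfolding Ay_def using A y by simp
    have Byc: "By \<in> carrier_vec r" unfolding By_def using A Ayc by simp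
    have "S *\<^sub>v y = x" unfolding y_def using Sc Z(1) x ZS(2)
      by (simp add: assoc_mult_mat_vec[symmetric, of S r r Z r x])
    moreover have "S *\<^sub>v y = y + By" unfolding S_def B_def By_def Ay_def using A y
      by (simp add: add_mult_distrib_mat_vec[of _ r r])
    ultimately have xe: "x = y + By" by simp
    have yBy: "y \<bullet> By = Ay \<bullet> Ay" unfolding By_def Ay_def
      using sp_mult_transpose[OF A y, of "A *\<^sub>v y"] A y by simp
    have U1x: "U1 *\<^sub>v x = 2 \<cdot>\<^sub>v y - x" unfolding U1 y_def using Z(1) x
      by (simp add: minus_mult_distrib_mat_vec[of _ r r] smult_mat_vec_l[of _ r r])
    have e1: "(U1 *\<^sub>v x) \<bullet> x = y \<bullet> y - By \<bullet> By"
      unfolding U1x unfolding xe using y Byc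
      by (simp add: minus_scalar_prod_distrib[of _ r] add_scalar_prod_distrib[of _ r]
          scalar_prod_add_distrib[of _ r] comm_scalar_prod[of By r y] yBy algebra_simps)
    have e2: "x \<bullet> x = y \<bullet> y + 2 * (Ay \<bullet> Ay) + By \<bullet> By"
      unfolding xe using y Byc
      by (simp add: add_scalar_prod_distrib[of _ r] scalar_prod_add_distrib[of _ r]
          comm_scalar_prod[of By r y] yBy algebra_simps)
    have s1: "Ay \<bullet> Ay \<le> a^2 * (y \<bullet> y)" unfolding Ay_def by (rule vnorm_sq_le[OF opA[OF y] a0])
    have t1: "By \<bullet> By \<le> a^2 * (Ay \<bullet> Ay)" unfolding By_def by (rule vnorm_sq_le[OF opAt[OF Ayc] a0])
    show ?thesis unfolding e1 e2
      by (rule quad_ineq[OF a0 a1' sp_self_ge0 sp_self_ge0 s1 sp_self_ge0 t1])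
  qed
  show ?thesis using that[OF U1c U2c U U1t quad[unfolded a_def] U2e U1S UU IrU JU] by blast
qed

end

definition sqsum :: "real list \<Rightarrow> real" where "sqsum xs = sum_list (map (\<lambda>x. x^2) xs)"

lemma lnorm_sqsum: "lnorm xs = sqrt (sqsum xs)"
  unfolding lnorm_def sqsum_def by (simp add: sum_list_sum_nth atLeast0LessThan)

lemma sqsum_nonneg: "sqsum xs \<ge> 0" unfolding sqsum_def by (induct xs) auto

lemma sqsum_append: "sqsum (xs @ ys) = sqsum xs + sqsum ys" unfolding sqsum_def by simp

lemma sqsum_concat: "sqsum (concat xss) = (\<Sum>xs\<leftarrow>xss. sqsum xs)"
  by (induct xss) (auto simp: sqsum_append, simp add: sqsum_def)

lemma map2_concat: assumes "\<And>j. j \<in> set L \<Longrightarrow> length (g j) = length (h j)"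
  shows "map2 f (concat (map g L)) (concat (map h L)) = concat (map (\<lambda>j. map2 f (g j) (h j)) L)"
  using assms by (induct L) auto

lemma map2_map: "map2 f (map u xs) (map v xs) = map (\<lambda>i. f (u i) (v i)) xs"
  by (induct xs) auto

lemma sqsum_upt: "sqsum (map f [a..<b]) = (\<Sum>i\<in>{a..<b}. (f i)^2)"
  unfolding sqsum_def by (simp add: interv_sum_list_conv_sum_set_nat comp_def)

lemma lnorm_split: assumes A: "A \<in> carrier_mat n m" and A0: "A0 \<in> carrier_mat n m"
  and M: "M \<in> carrier_mat k k" and M0: "M0 \<in> carrier_mat k k"
  shows "lnorm (map2 (-) (vecm A @ vech M) (vecm A0 @ vech M0)) \<le> frob (A - A0) + frob (M - M0)"
proof -
  have l: "length (vecm A) = length (vecm A0)"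
    using A A0 unfolding vecm_def by (simp add: length_concat comp_def)
  have e1: "map2 (-) (vecm A) (vecm A0) = concat (map (\<lambda>j. map (\<lambda>i. A $$ (i,j) - A0 $$ (i,j)) [0..<n]) [0..<m])"
    using A A0 unfolding vecm_def by (simp add: map2_concat map2_map)
  have e2: "map2 (-) (vech M) (vech M0) = concat (map (\<lambda>j. map (\<lambda>i. M $$ (i,j) - M0 $$ (i,j)) [j..<k]) [0..<k])"
    using M M0 unfolding vech_def by (simp add: map2_concat map2_map)
  have s1: "sqsum (map2 (-) (vecm A) (vecm A0)) = (frob (A - A0))^2"
  proof -
    have "sqsum (map2 (-) (vecm A) (vecm A0)) = (\<Sum>j\<in>{0..<m}. \<Sum>i\<in>{0..<n}. (A $$ (i,j) - A0 $$ (i,j))^2)"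
      unfolding e1 sqsum_concat by (simp add: comp_def sqsum_upt interv_sum_list_conv_sum_set_nat)
    also have "\<dots> = (\<Sum>i\<in>{0..<n}. \<Sum>j\<in>{0..<m}. (A $$ (i,j) - A0 $$ (i,j))^2)" by (rule sum.swap)
    also have "\<dots> = (frob (A - A0))^2" unfolding frob_def using A A0
      by (simp add: sum_nonneg atLeast0LessThan)
    finally show ?thesis .
  qed
  have s2: "sqsum (map2 (-) (vech M) (vech M0)) \<le> (frob (M - M0))^2"
  proof -
    have "sqsum (map2 (-) (vech M) (vech M0)) = (\<Sum>j\<in>{0..<k}. \<Sum>i\<in>{j..<k}. (M $$ (i,j) - M0 $$ (i,j))^2)"
      unfolding e2 sqsum_concat by (simp add: comp_def sqsum_upt interv_sum_list_conv_sum_set_nat)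
    also have "\<dots> \<le> (\<Sum>j\<in>{0..<k}. \<Sum>i\<in>{0..<k}. (M $$ (i,j) - M0 $$ (i,j))^2)"
      by (intro sum_mono sum_mono2) auto
    also have "\<dots> = (\<Sum>i\<in>{0..<k}. \<Sum>j\<in>{0..<k}. (M $$ (i,j) - M0 $$ (i,j))^2)" by (rule sum.swap)
    also have "\<dots> = (frob (M - M0))^2" unfolding frob_def using M M0
      by (simp add: sum_nonneg atLeast0LessThan)
    finally show ?thesis .
  qed
  have "lnorm (map2 (-) (vecm A @ vech M) (vecm A0 @ vech M0))
      = sqrt (sqsum (map2 (-) (vecm A) (vecm A0)) + sqsum (map2 (-) (vech M) (vech M0)))"
    unfolding lnorm_sqsum using l by (simp add: sqsum_append)
  also have "\<dots> \<le> sqrt (sqsum (map2 (-) (vecm A) (vecm A0))) + sqrt (sqsum (map2 (-) (vech M) (vech M0)))"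
    by (rule sqrt_add_le_add_sqrt) (auto simp: sqsum_nonneg)
  also have "\<dots> \<le> frob (A - A0) + frob (M - M0)"
    using s1 real_sqrt_le_mono[OF s2] by (intro add_mono) auto
  finally show ?thesis .
qed

lemma fip_one: "fip (1\<^sub>m r) (1\<^sub>m r) = real r"
proof -
  have "fip (1\<^sub>m r) (1\<^sub>m r) = (\<Sum>i<r. \<Sum>j<r. if i = j then 1 else 0)"
    unfolding fip_def by (intro sum.cong) auto
  also have "\<dots> = (\<Sum>i<r. 1)" by (intro sum.cong) auto
  finally show ?thesis by simp
qed

lemma fip_sq_minus: assumes "X \<in> carrier_mat n m" "Y \<in> carrier_mat n m"
  shows "fip (X - Y) (X - Y) = fip X X - 2 * fip X Y + fip Y Y"
proof -
  have XY: "X - Y \<in> carrier_mat n m" using assms by simp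
  show ?thesis
    unfolding fip_minus_left[OF assms XY] fip_minus_right[OF assms assms(1)] fip_minus_right[OF assms assms(2)]
      fip_comm[OF assms(2,1)] by simp
qed

lemma iso_fip: assumes U: "U \<in> carrier_mat p r" and UU: "transpose_mat U * U = 1\<^sub>m r"
  and X: "X \<in> carrier_mat r k" and Y: "Y \<in> carrier_mat r k"
  shows "fip (U * X) (U * Y) = fip X Y"
proof -
  have "fip (U * X) (U * Y) = fip X (transpose_mat U * (U * Y))"
    using U X Y by (intro fip_mult_left) auto
  also have "transpose_mat U * (U * Y) = Y"
    using U Y UU by (simp add: assoc_mult_mat[symmetric, of _ r p])
  finally show ?thesis .
qed

lemma EF_eq: assumes U: "U \<in> carrier_mat p r" and UU: "transpose_mat U * U = 1\<^sub>m r"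
  and U0: "U0 \<in> carrier_mat p r" and UU0: "transpose_mat U0 * U0 = 1\<^sub>m r"
  shows "fip (U0 - U * (transpose_mat U * U0)) (U0 - U * (transpose_mat U * U0)) = real r - fip (transpose_mat U * U0) (transpose_mat U * U0)"
    "fip (U - U0 * transpose_mat (transpose_mat U * U0)) (U - U0 * transpose_mat (transpose_mat U * U0)) = real r - fip (transpose_mat U * U0) (transpose_mat U * U0)"
proof -
  define Q where "Q = transpose_mat U * U0"
  have Q: "Q \<in> carrier_mat r r" unfolding Q_def using U U0 by simp
  have QT: "transpose_mat Q = transpose_mat U0 * U" unfolding Q_def using U U0 by (simp add: transpose_mult[of _ r p])
  have f1: "fip U0 U0 = real r"
  proof -
    have "fip U0 U0 = fip (U0 * 1\<^sub>m r) (U0 * 1\<^sub>m r)" using U0 by simp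
    also have "\<dots> = fip (1\<^sub>m r) (1\<^sub>m r)" by (rule iso_fip[OF U0 UU0 one_carrier_mat one_carrier_mat])
    also have "\<dots> = real r" by (rule fip_one)
    finally show ?thesis .
  qed
  have f1': "fip U U = real r"
  proof -
    have "fip U U = fip (U * 1\<^sub>m r) (U * 1\<^sub>m r)" using U by simp
    also have "\<dots> = fip (1\<^sub>m r) (1\<^sub>m r)" by (rule iso_fip[OF U UU one_carrier_mat one_carrier_mat])
    also have "\<dots> = real r" by (rule fip_one)
    finally show ?thesis .
  qed
  have "fip (U0 - U * Q) (U0 - U * Q) = fip U0 U0 - 2 * fip U0 (U * Q) + fip (U * Q) (U * Q)"
    using U U0 Q by (intro fip_sq_minus) auto
  also have "fip U0 (U * Q) = fip Q Q"
  proof -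
    have "fip U0 (U * Q) = fip (U * Q) U0" using U U0 Q by (intro fip_comm[of _ p r]) auto
    also have "\<dots> = fip Q (transpose_mat U * U0)" using U U0 Q by (intro fip_mult_left) auto
    finally show ?thesis unfolding Q_def .
  qed
  also have "fip (U * Q) (U * Q) = fip Q Q" by (rule iso_fip[OF U UU Q Q])
  finally show "fip (U0 - U * (transpose_mat U * U0)) (U0 - U * (transpose_mat U * U0)) = real r - fip (transpose_mat U * U0) (transpose_mat U * U0)"
    using f1 unfolding Q_def by simp
  have QTc: "transpose_mat Q \<in> carrier_mat r r" using Q by simp
  have "fip (U - U0 * transpose_mat Q) (U - U0 * transpose_mat Q)
      = fip U U - 2 * fip U (U0 * transpose_mat Q) + fip (U0 * transpose_mat Q) (U0 * transpose_mat Q)"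
    using U U0 Q by (intro fip_sq_minus) auto
  also have "fip U (U0 * transpose_mat Q) = fip (transpose_mat Q) (transpose_mat Q)"
  proof -
    have "fip U (U0 * transpose_mat Q) = fip (U0 * transpose_mat Q) U" using U U0 Q by (intro fip_comm[of _ p r]) auto
    also have "\<dots> = fip (transpose_mat Q) (transpose_mat U0 * U)" using U U0 Q by (intro fip_mult_left) auto
    finally show ?thesis unfolding QT .
  qed
  also have "fip (U0 * transpose_mat Q) (U0 * transpose_mat Q) = fip (transpose_mat Q) (transpose_mat Q)"
    by (rule iso_fip[OF U0 UU0 QTc QTc])
  also have "fip (transpose_mat Q) (transpose_mat Q) = fip Q Q" by (rule fip_transpose[OF Q Q])
  finally show "fip (U - U0 * transpose_mat (transpose_mat U * U0)) (U - U0 * transpose_mat (transpose_mat U * U0)) = real r - fip (transpose_mat U * U0) (transpose_mat U * U0)"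
    using f1' unfolding Q_def by simp
qed

lemma proj_frob: assumes U: "U \<in> carrier_mat p r" and UU: "transpose_mat U * U = 1\<^sub>m r"
  and Y: "Y \<in> carrier_mat p k"
  shows "frob (Y - U * (transpose_mat U * Y)) \<le> frob Y"
proof -
  define V where "V = transpose_mat U * Y"
  have V: "V \<in> carrier_mat r k" unfolding V_def using U Y by simp
  have "(frob (Y - U * V))^2 = fip Y Y - 2 * fip Y (U * V) + fip (U * V) (U * V)"
    unfolding frob_sq using U V Y by (intro fip_sq_minus) auto
  also have "fip Y (U * V) = fip V V"
  proof -
    have "fip Y (U * V) = fip (U * V) Y" using U V Y by (intro fip_comm[of _ p k]) auto
    also have "\<dots> = fip V (transpose_mat U * Y)" using U V Y by (intro fip_mult_left) auto
    finally show ?thesis unfolding V_def .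
  qed
  also have "fip (U * V) (U * V) = fip V V" by (rule iso_fip[OF U UU V V])
  finally have "(frob (Y - U * V))^2 \<le> (frob Y)^2" using fip_self_ge0[of V] unfolding frob_sq by simp
  thus ?thesis unfolding V_def by (rule power2_le_imp_le) simp
qed

lemma UUr_gen: "transpose_mat U * U = 1\<^sub>m r \<Longrightarrow> dim_row Y = r \<Longrightarrow> dim_col U = r \<Longrightarrow> dim_row U = p \<Longrightarrow>
  transpose_mat U * (U * Y) = (Y::real mat)"
  using massoc[of "transpose_mat U" U Y] by simp

theorem theorem4:
  fixes p r :: nat and A A0 M M0 :: "real mat"
  assumes "1 \<le> r" "r \<le> p"
    and "A \<in> carrier_mat (p - r) r" "A0 \<in> carrier_mat (p - r) r"
    and "spec_norm A < 1" "spec_norm A0 < 1"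
    and "pos_def r M" "pos_def r M0"
    and "frob (Sigma p r A M - Sigma p r A0 M0)
           \<le> (1 - (spec_norm A0)^2)^2 * lambda_min M0
              / (4 * sqrt 2 * (1 + (spec_norm A0)^2)^2)"
  shows "lnorm (map2 (-) (vecm A @ vech M) (vecm A0 @ vech M0))
           \<le> (1 + 16 * sqrt 2 * (1 + lambda_max M0) * (1 + (spec_norm A0)^2)
                 / (lambda_min M0 * (1 - (spec_norm A0)^2)))
             * frob (Sigma p r A M - Sigma p r A0 M0)"
proof -
  note r1 = assms(1) and rp = assms(2) and Ac = assms(3) and A0c = assms(4)
    and a1 = assms(5) and a01 = assms(6)
  obtain U1 U2 where U1c: "U1 \<in> carrier_mat r r" and U2c: "U2 \<in> carrier_mat (p - r) r"
    and Ue: "Ucay p r A = Ipr p r * U1 + Jm p r * U2" and U1t: "transpose_mat U1 = U1"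
    and q1: "\<And>x. x \<in> carrier_vec r \<Longrightarrow> (U1 *\<^sub>v x) \<bullet> x \<ge> (1 - (spec_norm A)^2) / (1 + (spec_norm A)^2) * (x \<bullet> x)"
    and U2e: "U2 = A * (1\<^sub>m r + U1)"
    and U1S: "(1\<^sub>m r + U1) * (1\<^sub>m r + transpose_mat A * A) = 2 \<cdot>\<^sub>m 1\<^sub>m r"
    and UU: "transpose_mat (Ucay p r A) * Ucay p r A = 1\<^sub>m r"
    and IrU: "transpose_mat (Ipr p r) * Ucay p r A = U1" and JU: "transpose_mat (Jm p r) * Ucay p r A = U2"
    using cayley_props[OF rp Ac r1 a1] by metis
  obtain V1 V2 where V1c: "V1 \<in> carrier_mat r r" and V2c: "V2 \<in> carrier_mat (p - r) r"
    and Ve: "Ucay p r A0 = Ipr p r * V1 + Jm p r * V2" and V1t: "transpose_mat V1 = V1"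
    and q0: "\<And>x. x \<in> carrier_vec r \<Longrightarrow> (V1 *\<^sub>v x) \<bullet> x \<ge> (1 - (spec_norm A0)^2) / (1 + (spec_norm A0)^2) * (x \<bullet> x)"
    and V2e: "V2 = A0 * (1\<^sub>m r + V1)"
    and UU0: "transpose_mat (Ucay p r A0) * Ucay p r A0 = 1\<^sub>m r"
    and IrU0: "transpose_mat (Ipr p r) * Ucay p r A0 = V1" and JU0: "transpose_mat (Jm p r) * Ucay p r A0 = V2"
    using cayley_props[OF rp A0c r1 a01] by metis
  define U where "U = Ucay p r A"
  define U0 where "U0 = Ucay p r A0"
  have Uc: "U \<in> carrier_mat p r" unfolding U_def Ue using U1c U2c Ipr_carrier[of p r] Jm_carrier[of p r]
    by (metis add_carrier_mat mult_carrier_mat)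
  have U0c: "U0 \<in> carrier_mat p r" unfolding U0_def Ve using V1c V2c Ipr_carrier[of p r] Jm_carrier[of p r]
    by (metis add_carrier_mat mult_carrier_mat)
  note UU = UU[folded U_def] and UU0 = UU0[folded U0_def]
  have Mc: "M \<in> carrier_mat r r" and Mt: "transpose_mat M = M" using assms(7) unfolding pos_def_def by auto
  have M0c: "M0 \<in> carrier_mat r r" and M0t: "transpose_mat M0 = M0" using assms(8) unfolding pos_def_def by auto
  note eig = eig_facts[OF assms(8) r1]
  define lam where "lam = lambda_min M0"
  define Lam where "Lam = lambda_max M0"
  define a0 where "a0 = spec_norm A0"
  have lam0: "lam > 0" and Lam0: "Lam > 0" using eig(1,4) unfolding lam_def Lam_def by auto
  have a00: "a0 \<ge> 0" using spec_facts(1)[OF A0c r1] unfolding a0_def .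
  have a01': "a0 < 1" using a01 unfolding a0_def .
  define S where "S = U * M * transpose_mat U"
  define S0 where "S0 = U0 * M0 * transpose_mat U0"
  have SS: "Sigma p r A M = S" "Sigma p r A0 M0 = S0" unfolding S_def S0_def U_def U0_def Sigma_def by auto
  define D where "D = S - S0"
  define \<delta> where "\<delta> = frob D"
  define Q where "Q = transpose_mat U * U0"
  define E where "E = U0 - U * Q"
  define F where "F = U - U0 * transpose_mat Q"
  define K where "K = Q - 1\<^sub>m r"
  have Sc: "S \<in> carrier_mat p p" unfolding S_def using Uc Mc by simp
  have S0c: "S0 \<in> carrier_mat p p" unfolding S0_def using U0c M0c by simp
  have Dc: "D \<in> carrier_mat p p" unfolding D_def using S0c by simp
  have Qc: "Q \<in> carrier_mat r r" unfolding Q_def using Uc U0c by simp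
  have Ec: "E \<in> carrier_mat p r" unfolding E_def using Uc Qc by simp
  have Fc: "F \<in> carrier_mat p r" unfolding F_def using Uc U0c Qc by simp
  have Kc: "K \<in> carrier_mat r r" unfolding K_def by simp
  note dU = carrier_matD[OF Uc] and dU0 = carrier_matD[OF U0c] and dM = carrier_matD[OF Mc]
    and dM0 = carrier_matD[OF M0c] and dQ = carrier_matD[OF Qc]
  have UUr: "\<And>Y. dim_row Y = r \<Longrightarrow> transpose_mat U * (U * Y) = Y"
    using UUr_gen[OF UU] dU by blast
  have UUr0: "\<And>Y. dim_row Y = r \<Longrightarrow> transpose_mat U0 * (U0 * Y) = Y"
    using UUr_gen[OF UU0] dU0 by blast
  define \<epsilon> where "\<epsilon> = frob E"
  have FE: "frob F = \<epsilon>"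
    using EF_eq[OF Uc UU U0c UU0] unfolding \<epsilon>_def frob_fip E_def F_def Q_def by simp
  have opU0t: "\<And>w. w \<in> carrier_vec p \<Longrightarrow> vnorm (transpose_mat U0 *\<^sub>v w) \<le> 1 * vnorm w"
    using iso_facts(2)[OF U0c UU0] by simp
  have opUt: "\<And>w. w \<in> carrier_vec p \<Longrightarrow> vnorm (transpose_mat U *\<^sub>v w) \<le> 1 * vnorm w"
    using iso_facts(2)[OF Uc UU] by simp
  define W where "W = D * U0"
  have Wc: "W \<in> carrier_mat p r" unfolding W_def using Dc U0c by simp
  have EM: "E * M0 = - (W - U * (transpose_mat U * W))"
  proof -
    have W1: "W = U * (M * Q) - U0 * M0"
      unfolding W_def D_def S_def S0_def Q_def using dU dU0 dM dM0 UUr0 UU0 by (simp add: malg)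
    have W2: "U * (transpose_mat U * W) = U * (M * Q) - U * (Q * M0)"
      unfolding W1 Q_def using dU dU0 dM dM0 UUr UU by (simp add: malg)
    have "E * M0 = U0 * M0 - U * (Q * M0)" unfolding E_def using dU dU0 dM0 dQ by (simp add: malg)
    thus ?thesis unfolding W2 unfolding W1 using dU dU0 dM dM0 dQ by (intro eq_matI) auto
  qed
  have "frob (E * M0) \<le> \<delta>"
  proof -
    have "frob (E * M0) = frob (W - U * (transpose_mat U * W))" unfolding EM
      using Wc Uc by (intro frob_uminus[of _ p r]) (simp add: minus_carrier_mat)
    also have "\<dots> \<le> frob W" by (rule proj_frob[OF Uc UU Wc])
    also have "\<dots> \<le> 1 * frob D" unfolding W_def by (rule frob_mult_right_le[OF Dc U0c _ opU0t]) simp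
    finally show ?thesis unfolding \<delta>_def by simp
  qed
  moreover have "frob (E * M0) \<ge> lam * \<epsilon>"
  proof -
    have "frob (E * M0) = frob (transpose_mat (E * M0))" using Ec M0c by (intro frob_transpose[symmetric, of _ p r]) simp
    also have "transpose_mat (E * M0) = M0 * transpose_mat E" using Ec M0c M0t by (simp add: transpose_mult[of _ p r])
    also have "frob (M0 * transpose_mat E) \<ge> lam * frob (transpose_mat E)"
      using eig(6) unfolding lam_def by (intro frob_mult_ge[OF M0c _ ]) (use Ec eig(1) in auto)
    finally show ?thesis unfolding \<epsilon>_def frob_transpose[OF Ec] .
  qed
  ultimately have eps: "\<epsilon> \<le> \<delta> / lam" using lam0 by (simp add: field_simps)
  define c0 where "c0 = (1 - a0^2) / (1 + a0^2)"
  have c0p: "c0 > 0" unfolding c0_def using a00 a01' by (simp add: power_less_one_iff add_pos_nonneg abs_square_less_1)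
  have c0le: "c0 \<le> 1" unfolding c0_def by (simp add: add_pos_nonneg divide_le_eq_1)
  note dI = dims[OF rp Ac]
  have IrU': "transpose_mat (Ipr p r) * (U * Y) = U1 * Y" if "dim_row Y = r" for Y
    using massoc[of "transpose_mat (Ipr p r)" U Y] IrU[folded U_def] dU that dI by simp
  have IrU0': "transpose_mat (Ipr p r) * (U0 * Y) = V1 * Y" if "dim_row Y = r" for Y
    using massoc[of "transpose_mat (Ipr p r)" U0 Y] IrU0[folded U0_def] dU0 that dI by simp
  define E1 where "E1 = transpose_mat (Ipr p r) * E"
  define F1 where "F1 = transpose_mat (Ipr p r) * F"
  have E1c: "E1 \<in> carrier_mat r r" unfolding E1_def using Ec Ipr_carrier[of p r] by (metis mult_carrier_mat transpose_carrier_mat)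
  have F1c: "F1 \<in> carrier_mat r r" unfolding F1_def using Fc Ipr_carrier[of p r] by (metis mult_carrier_mat transpose_carrier_mat)
  have E1e: "U1 * Q = V1 - E1"
  proof -
    have "E1 = V1 - U1 * Q" unfolding E1_def E_def using dU dU0 dQ IrU' IrU[folded U_def] IrU0[folded U0_def] dI
      by (simp add: malg)
    thus ?thesis using U1c V1c Qc E1c by (intro eq_matI) auto
  qed
  have F1e: "Q * V1 = U1 - transpose_mat F1"
  proof -
    have "F1 = U1 - V1 * transpose_mat Q" unfolding F1_def F_def using dU dU0 dQ IrU0' IrU[folded U_def] dI
      by (simp add: malg)
    hence "transpose_mat F1 = U1 - Q * V1" using U1t V1t dQ carrier_matD[OF U1c] carrier_matD[OF V1c]
      by (simp add: malg)
    thus ?thesis using U1c V1c Qc F1c by (intro eq_matI) auto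
  qed
  have Keq: "U1 * K + K * V1 = - (E1 + transpose_mat F1)"
  proof -
    have "U1 * K + K * V1 = (U1 * Q - U1) + (Q * V1 - V1)" unfolding K_def
      using carrier_matD[OF U1c] carrier_matD[OF V1c] dQ by (simp add: malg)
    also have "\<dots> = - (E1 + transpose_mat F1)" unfolding E1e F1e
      using U1c V1c E1c F1c by (intro eq_matI) auto
    finally show ?thesis .
  qed
  define k where "k = frob K"
  have opIrt: "\<And>w. w \<in> carrier_vec p \<Longrightarrow> vnorm (transpose_mat (Ipr p r) *\<^sub>v w) \<le> 1 * vnorm w"
    using iso_facts(2)[OF Ipr_carrier IrIr[OF rp]] by simp
  have IrTc: "transpose_mat (Ipr p r) \<in> carrier_mat r p" by simp
  have fE1: "frob E1 \<le> \<epsilon>" unfolding E1_def \<epsilon>_def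
    using frob_mult_le[OF IrTc Ec _ opIrt] by simp
  have fF1: "frob (transpose_mat F1) \<le> \<epsilon>" unfolding frob_transpose[OF F1c] unfolding FE[symmetric] F1_def
    using frob_mult_le[OF IrTc Fc _ opIrt] by simp
  have "c0 * fip K K \<le> fip (U1 * K + K * V1) K"
  proof -
    have "0 * fip K K \<le> fip (U1 * K) K"
    proof (rule fip_quad_ge[OF U1c Kc])
      fix v :: "real vec" assume v: "v \<in> carrier_vec r"
      have "(1 - (spec_norm A)^2) / (1 + (spec_norm A)^2) \<ge> 0"
        using a1 spec_facts(1)[OF Ac r1] by (simp add: add_pos_nonneg abs_square_le_1 less_imp_le power_le_one)
      hence "(1 - (spec_norm A)^2) / (1 + (spec_norm A)^2) * (v \<bullet> v) \<ge> 0"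
        using sp_self_ge0[of v] by (rule mult_nonneg_nonneg)
      thus "0 * (v \<bullet> v) \<le> (U1 *\<^sub>v v) \<bullet> v" using q1[OF v] by simp
    qed
    moreover have "c0 * fip K K \<le> fip (K * V1) K"
    proof -
      have "fip (K * V1) K = fip (transpose_mat (K * V1)) (transpose_mat K)"
        using Kc V1c by (intro fip_transpose[symmetric, of _ r r]) auto
      also have "transpose_mat (K * V1) = V1 * transpose_mat K" using Kc V1c V1t by (simp add: transpose_mult[of _ r r])
      finally have e: "fip (K * V1) K = fip (V1 * transpose_mat K) (transpose_mat K)" .
      have "c0 * fip (transpose_mat K) (transpose_mat K) \<le> fip (V1 * transpose_mat K) (transpose_mat K)"
        by (rule fip_quad_ge[OF V1c]) (use Kc q0 in \<open>auto simp: c0_def a0_def\<close>)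
      thus ?thesis unfolding e fip_transpose[OF Kc Kc] .
    qed
    ultimately show ?thesis using fip_add_left[of "U1 * K" r r "K * V1" K] U1c V1c Kc by simp
  qed
  also have "\<dots> = fip (- (E1 + transpose_mat F1)) K" unfolding Keq ..
  also have "\<dots> \<le> frob (- (E1 + transpose_mat F1)) * frob K"
    using E1c F1c Kc by (intro fip_cs[of _ r r]) auto
  also have "\<dots> \<le> (frob E1 + frob (transpose_mat F1)) * frob K"
  proof (rule mult_right_mono)
    show "frob (- (E1 + transpose_mat F1)) \<le> frob E1 + frob (transpose_mat F1)"
      using frob_uminus[of "E1 + transpose_mat F1" r r] frob_add[of E1 r r "transpose_mat F1"] E1c F1c by simp
  qed simp
  finally have "c0 * k^2 \<le> (frob E1 + frob (transpose_mat F1)) * k"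
    unfolding k_def frob_sq .
  also have "\<dots> \<le> (2 * \<epsilon>) * k" using fE1 fF1 unfolding k_def by (intro mult_right_mono) auto
  finally have kk: "c0 * k^2 \<le> (2 * \<epsilon>) * k" .
  have kb: "k \<le> 2 * \<epsilon> / c0"
  proof (cases "k = 0")
    case True thus ?thesis using c0p unfolding \<epsilon>_def by simp
  next
    case False
    hence "k > 0" unfolding k_def using frob_ge0[of K] by linarith
    hence "c0 * k \<le> 2 * \<epsilon>" using kk by (simp add: power2_eq_square mult.assoc[symmetric])
    thus ?thesis using c0p by (simp add: field_simps)
  qed
  define Dl where "Dl = U - U0"
  have Dlc: "Dl \<in> carrier_mat p r" unfolding Dl_def using U0c by simp
  have Dle: "Dl = F + U0 * transpose_mat K"
  proof -
    have "U0 * transpose_mat K = U0 * transpose_mat Q - U0" unfolding K_def using dU0 dQ by (simp add: malg)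
    thus ?thesis unfolding Dl_def F_def using Uc U0c Qc by (intro eq_matI) auto
  qed
  have fDl: "frob Dl \<le> \<epsilon> + k"
  proof -
    have KTc: "transpose_mat K \<in> carrier_mat r r" using Kc by simp
    have "frob (U0 * transpose_mat K) = frob (transpose_mat K)"
      unfolding frob_fip using iso_fip[OF U0c UU0 KTc KTc] by simp
    also have "\<dots> = k" unfolding k_def by (rule frob_transpose[OF Kc])
    finally have "frob (U0 * transpose_mat K) = k" .
    moreover have "frob Dl \<le> frob F + frob (U0 * transpose_mat K)" unfolding Dle
      using Fc U0c KTc by (intro frob_add[of _ p r]) auto
    ultimately show ?thesis using FE by simp
  qed
  have opS0: "vnorm (S0 *\<^sub>v v) \<le> Lam * vnorm v" if v: "v \<in> carrier_vec p" for v
  proof -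
    have "S0 *\<^sub>v v = U0 *\<^sub>v (M0 *\<^sub>v (transpose_mat U0 *\<^sub>v v))" unfolding S0_def
      using U0c M0c v by (subst assoc_mult_mat_vec[of "U0 * M0" p r "transpose_mat U0" p v]) auto
    hence "vnorm (S0 *\<^sub>v v) = vnorm (M0 *\<^sub>v (transpose_mat U0 *\<^sub>v v))"
      using iso_facts(1)[OF U0c UU0] M0c U0c v by simp
    also have "\<dots> \<le> Lam * vnorm (transpose_mat U0 *\<^sub>v v)" unfolding Lam_def using U0c v by (intro eig(5)) simp
    also have "\<dots> \<le> Lam * vnorm v" using opU0t[OF v] Lam0 by (intro mult_left_mono) auto
    finally show ?thesis .
  qed
  have S0t: "transpose_mat S0 = S0" unfolding S0_def using dU0 dM0 M0t by (simp add: malg)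
  have Mdiff: "M - M0 = transpose_mat U * (D * U) + transpose_mat U * (S0 * Dl) + transpose_mat Dl * (S0 * U0)"
  proof -
    have t1: "transpose_mat U * (D * U) = M - transpose_mat U * (U0 * (M0 * (transpose_mat U0 * U)))"
      unfolding D_def S_def S0_def using dU dU0 dM dM0 UU UUr by (simp add: malg)
    have t2: "transpose_mat U * (S0 * Dl) = transpose_mat U * (U0 * (M0 * (transpose_mat U0 * U))) - transpose_mat U * (U0 * M0)"
      unfolding Dl_def S0_def using dU dU0 dM0 UU0 UUr0 by (simp add: malg)
    have t3: "transpose_mat Dl * (S0 * U0) = transpose_mat U * (U0 * M0) - M0"
      unfolding Dl_def S0_def using dU dU0 dM0 UU0 UUr0 by (simp add: malg)
    show ?thesis unfolding t1 t2 t3 using Uc U0c Mc M0c by (intro eq_matI) auto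
  qed
  have fM: "frob (M - M0) \<le> \<delta> + 2 * Lam * frob Dl"
  proof -
    have UTc: "transpose_mat U \<in> carrier_mat r p" using Uc by simp
    have b1: "frob (transpose_mat U * (D * U)) \<le> \<delta>"
    proof -
      have "frob (transpose_mat U * (D * U)) \<le> 1 * frob (D * U)"
        by (rule frob_mult_le[OF UTc _ _ opUt]) (use Dc Uc in auto)
      also have "\<dots> \<le> 1 * frob D" using frob_mult_right_le[OF Dc Uc _ opUt] by simp
      finally show ?thesis unfolding \<delta>_def by simp
    qed
    have b2: "frob (transpose_mat U * (S0 * Dl)) \<le> Lam * frob Dl"
    proof -
      have "frob (transpose_mat U * (S0 * Dl)) \<le> 1 * frob (S0 * Dl)"
        by (rule frob_mult_le[OF UTc _ _ opUt]) (use S0c Dlc in auto)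
      also have "\<dots> \<le> Lam * frob Dl" using frob_mult_le[OF S0c Dlc _ opS0] Lam0 by simp
      finally show ?thesis by simp
    qed
    have b3: "frob (transpose_mat Dl * (S0 * U0)) \<le> Lam * frob Dl"
    proof -
      have "frob (transpose_mat Dl * (S0 * U0)) = frob (transpose_mat (transpose_mat Dl * (S0 * U0)))"
        using Dlc S0c U0c by (intro frob_transpose[symmetric, of _ r r]) auto
      also have "transpose_mat (transpose_mat Dl * (S0 * U0)) = transpose_mat U0 * (S0 * Dl)"
        using carrier_matD[OF Dlc] carrier_matD[OF S0c] dU0 S0t by (simp add: malg)
      also have "frob (transpose_mat U0 * (S0 * Dl)) \<le> 1 * frob (S0 * Dl)"
        by (rule frob_mult_le[OF _ _ _ opU0t]) (use U0c S0c Dlc in auto)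
      also have "\<dots> \<le> Lam * frob Dl" using frob_mult_le[OF S0c Dlc _ opS0] Lam0 by simp
      finally show ?thesis .
    qed
    have c1: "transpose_mat U * (D * U) \<in> carrier_mat r r" using Uc Dc by simp
    have c2: "transpose_mat U * (S0 * Dl) \<in> carrier_mat r r" using Uc S0c Dlc by simp
    have c3: "transpose_mat Dl * (S0 * U0) \<in> carrier_mat r r" using U0c S0c Dlc by simp
    have "frob (M - M0) \<le> frob (transpose_mat U * (D * U) + transpose_mat U * (S0 * Dl)) + frob (transpose_mat Dl * (S0 * U0))"
      unfolding Mdiff using c1 c2 c3 by (intro frob_add[of _ r r]) auto
    also have "\<dots> \<le> (frob (transpose_mat U * (D * U)) + frob (transpose_mat U * (S0 * Dl))) + frob (transpose_mat Dl * (S0 * U0))"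
      using frob_add[OF c1 c2] by simp
    finally show ?thesis using b1 b2 b3 by simp
  qed
  define Sm where "Sm = 1\<^sub>m r + transpose_mat A * A"
  have Smc: "Sm \<in> carrier_mat r r" unfolding Sm_def using Ac by simp
  define G where "G = (U2 - V2) - A0 * (U1 - V1)"
  have Gc: "G \<in> carrier_mat (p - r) r" unfolding G_def using A0c U1c V1c by simp
  have JD: "transpose_mat (Jm p r) * Dl = U2 - V2" unfolding Dl_def
    using JU[folded U_def] JU0[folded U0_def] dU dU0 dI by (simp add: malg)
  have ID: "transpose_mat (Ipr p r) * Dl = U1 - V1" unfolding Dl_def
    using IrU[folded U_def] IrU0[folded U0_def] dU dU0 dI by (simp add: malg)
  have U2S: "U2 * Sm = 2 \<cdot>\<^sub>m A"
  proof -
    have "U2 * Sm = A * ((1\<^sub>m r + U1) * Sm)" unfolding U2e using Ac U1c Smc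
      by (intro assoc_mult_mat[of _ "p - r" r _ r _ r]) auto
    also have "\<dots> = 2 \<cdot>\<^sub>m A" unfolding Sm_def U1S using Ac by (simp add: malg)
    finally show ?thesis .
  qed
  have A0S: "(A0 * (1\<^sub>m r + U1)) * Sm = 2 \<cdot>\<^sub>m A0"
  proof -
    have "(A0 * (1\<^sub>m r + U1)) * Sm = A0 * ((1\<^sub>m r + U1) * Sm)" using A0c U1c Smc
      by (intro assoc_mult_mat[of _ "p - r" r _ r _ r]) auto
    also have "\<dots> = 2 \<cdot>\<^sub>m A0" unfolding Sm_def U1S using A0c by (simp add: malg)
    finally show ?thesis .
  qed
  have Ge: "G = U2 - A0 * (1\<^sub>m r + U1)"
  proof -
    have "G = U2 - (A0 + A0 * V1) - (A0 * U1 - A0 * V1)" unfolding G_def V2e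
      using carrier_matD[OF A0c] carrier_matD[OF U1c] carrier_matD[OF V1c] by (simp add: malg)
    moreover have "A0 * (1\<^sub>m r + U1) = A0 + A0 * U1"
      using carrier_matD[OF A0c] carrier_matD[OF U1c] by (simp add: malg)
    ultimately show ?thesis using A0c U1c V1c U2c by (intro eq_matI) auto
  qed
  have AG: "A - A0 = G * ((1/2) \<cdot>\<^sub>m Sm)"
  proof -
    have "G * ((1/2) \<cdot>\<^sub>m Sm) = (1/2) \<cdot>\<^sub>m (U2 * Sm - (A0 * (1\<^sub>m r + U1)) * Sm)"
      unfolding Ge using carrier_matD[OF A0c] carrier_matD[OF U1c] carrier_matD[OF U2c] carrier_matD[OF Smc]
      by (simp add: msmult_r mminus_mult)
    also have "\<dots> = A - A0" unfolding U2S A0S using Ac A0c by (intro eq_matI) auto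
    finally show ?thesis by simp
  qed
  have opJt: "\<And>w. w \<in> carrier_vec p \<Longrightarrow> vnorm (transpose_mat (Jm p r) *\<^sub>v w) \<le> 1 * vnorm w"
    using iso_facts(2)[OF Jm_carrier JJ[OF rp]] by simp
  have JTc: "transpose_mat (Jm p r) \<in> carrier_mat (p - r) p" by simp
  have fG: "frob G \<le> 2 * frob Dl"
  proof -
    have h1: "frob G \<le> frob (U2 - V2) + frob (A0 * (U1 - V1))" unfolding G_def
      using U2c V2c A0c U1c V1c by (intro frob_minus[of _ "p - r" r]) auto
    have h2: "frob (U2 - V2) \<le> 1 * frob Dl" unfolding JD[symmetric]
      by (rule frob_mult_le[OF JTc Dlc _ opJt]) simp
    have h3: "frob (A0 * (U1 - V1)) \<le> a0 * frob (U1 - V1)" unfolding a0_def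
      using U1c V1c by (intro frob_mult_le[OF A0c _ _ spec_facts(2)[OF A0c r1]]) (auto simp: spec_facts(1)[OF A0c r1])
    have h4: "frob (U1 - V1) \<le> 1 * frob Dl" unfolding ID[symmetric]
      by (rule frob_mult_le[OF IrTc Dlc _ opIrt]) simp
    have h5: "a0 * frob (U1 - V1) \<le> a0 * frob Dl" using h4 a00 by (intro mult_left_mono) auto
    have h6: "a0 * frob Dl \<le> frob Dl" using a00 a01' frob_ge0[of Dl]
      by (intro mult_left_le_one_le) auto
    show ?thesis using h1 h2 h3 h5 h6 by simp
  qed
  define a where "a = spec_norm A"
  have a0': "a \<ge> 0" "a < 1" using spec_facts(1)[OF Ac r1] a1 unfolding a_def by auto
  have opSm: "vnorm (transpose_mat ((1/2) \<cdot>\<^sub>m Sm) *\<^sub>v v) \<le> 1 * vnorm v" if v: "v \<in> carrier_vec r" for v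
  proof -
    have St: "transpose_mat ((1/2) \<cdot>\<^sub>m Sm) = (1/2) \<cdot>\<^sub>m Sm" unfolding Sm_def using carrier_matD[OF Ac] by (simp add: malg)
    have Av: "A *\<^sub>v v \<in> carrier_vec (p - r)" using Ac v by simp
    have "Sm *\<^sub>v v = v + transpose_mat A *\<^sub>v (A *\<^sub>v v)" unfolding Sm_def
      using Ac v by (simp add: add_mult_distrib_mat_vec[of _ r r])
    hence "vnorm (Sm *\<^sub>v v) \<le> vnorm v + vnorm (transpose_mat A *\<^sub>v (A *\<^sub>v v))"
      using vnorm_add[of v r "transpose_mat A *\<^sub>v (A *\<^sub>v v)"] v Ac by simp
    also have "vnorm (transpose_mat A *\<^sub>v (A *\<^sub>v v)) \<le> a * vnorm (A *\<^sub>v v)"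
      unfolding a_def using op_transpose[OF Ac spec_facts(1)[OF Ac r1] spec_facts(2)[OF Ac r1] Av] .
    also have "\<dots> \<le> a * (a * vnorm v)" unfolding a_def
      using spec_facts[OF Ac r1] v by (intro mult_left_mono) auto
    also have "\<dots> \<le> vnorm v"
    proof -
      have "a * a \<le> 1" using a0' by (intro mult_le_one) auto
      hence "(a * a) * vnorm v \<le> vnorm v" using a0' vnorm_ge0[of v]
        by (intro mult_left_le_one_le) auto
      thus ?thesis by (simp add: mult.assoc)
    qed
    finally have "vnorm (Sm *\<^sub>v v) \<le> 2 * vnorm v" by simp
    moreover have "(1/2) \<cdot>\<^sub>m Sm *\<^sub>v v = (1/2) \<cdot>\<^sub>v (Sm *\<^sub>v v)" using Smc v by (rule smult_mat_vec_l)
    ultimately show ?thesis unfolding St by (simp add: vnorm_smult)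
  qed
  have fA: "frob (A - A0) \<le> 2 * frob Dl"
  proof -
    have "frob (A - A0) \<le> 1 * frob G" unfolding AG
      by (rule frob_mult_right_le[OF Gc _ _ opSm]) (use Smc in auto)
    thus ?thesis using fG by simp
  qed
  have L: "lnorm (map2 (-) (vecm A @ vech M) (vecm A0 @ vech M0)) \<le> frob (A - A0) + frob (M - M0)"
    by (rule lnorm_split[OF Ac A0c Mc M0c])
  have eps0: "\<epsilon> \<ge> 0" unfolding \<epsilon>_def by simp
  have d0: "\<delta> \<ge> 0" unfolding \<delta>_def by simp
  have X1: "frob Dl \<le> 3 * \<epsilon> / c0"
  proof -
    have "\<epsilon> * c0 \<le> \<epsilon>" using eps0 c0p c0le by (intro mult_right_le_one_le) auto
    hence "\<epsilon> \<le> \<epsilon> / c0" using c0p by (simp add: le_divide_eq)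
    moreover have "3 * \<epsilon> / c0 = \<epsilon> / c0 + 2 * \<epsilon> / c0" by (simp add: add_divide_distrib[symmetric])
    ultimately show ?thesis using fDl kb by linarith
  qed
  have X2: "3 * \<epsilon> / c0 \<le> 3 * (\<delta> / lam) / c0"
    using eps c0p by (intro divide_right_mono mult_left_mono) auto
  have "lnorm (map2 (-) (vecm A @ vech M) (vecm A0 @ vech M0)) \<le> \<delta> + 2 * (1 + Lam) * frob Dl"
    using L fA fM by (simp add: algebra_simps)
  also have "\<dots> \<le> \<delta> + 2 * (1 + Lam) * (3 * (\<delta> / lam) / c0)"
    using X1 X2 Lam0 by (intro add_left_mono mult_left_mono) auto
  also have "\<dots> = (1 + 6 * (1 + Lam) * (1 + a0^2) / (lam * (1 - a0^2))) * \<delta>"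
    unfolding c0_def using lam0 a00 a01' by (simp add: field_simps power_less_one_iff)
  also have "\<dots> \<le> (1 + 16 * sqrt 2 * (1 + Lam) * (1 + a0^2) / (lam * (1 - a0^2))) * \<delta>"
  proof -
    have s1: "1 \<le> sqrt (2::real)" by simp
    have "(6::real) \<le> 16 * sqrt 2" using s1 by linarith
    hence num: "6 * (1 + Lam) * (1 + a0^2) \<le> 16 * sqrt 2 * (1 + Lam) * (1 + a0^2)"
      using Lam0 by (intro mult_right_mono) auto
    have den: "0 \<le> lam * (1 - a0^2)" using lam0 a00 a01' by (simp add: power_le_one)
    have "6 * (1 + Lam) * (1 + a0^2) / (lam * (1 - a0^2)) \<le> 16 * sqrt 2 * (1 + Lam) * (1 + a0^2) / (lam * (1 - a0^2))"
      by (rule divide_right_mono[OF num den])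
    thus ?thesis using d0 by (intro mult_right_mono) auto
  qed
  finally show ?thesis unfolding \<delta>_def D_def SS[symmetric] lam_def Lam_def a0_def .
qed

end
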